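(* Let $J=(j_1,\ldots,j_r)\in\mathbb{Z}^r$, $\delta=(d_1,\ldots,d_r)\in C_J$ and $i\in\{1,\ldots,n-1\}$. Then the following algorithm terminates and outputs $r_i$: (1) Let $D\subset\{1,\ldots,r\}$ be the set of $t$ with $\inf(d_t)=j_t$. (2) For every $t\in D$, compute $p_t\in B_n^+$ with $d_t=\Delta^{j_t}p_t$. (3) Let $s=\sigma_i$. (4) If $\tau^{j_t}(s)\prec p_ts$ for every $t\in D$, return $s$ and stop. (5) Otherwise take $m\in D$ with $\tau^{j_m}(s)\not\prec p_ms$. (6) Compute $s'\in B_n^+$ such that $(p_ms)s'=\tau^{j_m}(s)\vee p_ms$. (7) Replace $s$ by $ss'$ and go to step (4).
   Context: $B_n$ is the braid group with Artin generators $\sigma_1,\ldots,\sigma_{n-1}$, $B_n^+$ the positive braid monoid, $\Delta$ the Garside element (half twist), and $\tau:B_n\to B_n$ the automorphism $\tau(x)=\Delta^{-1}x\Delta$. For $a,b\in B_n^+$, $a\prec b$ means $ac=b$ for some $c\in B_n^+$; $a\vee b$ denotes the least common multiple with respect to $\prec$. Simple elements are the $s\in B_n^+$ with $s\prec\Delta$. For $a\in B_n$, $\inf(a)$ is the largest $k\in\mathbb{Z}$ with $a=\Delta^kp$, $p\in B_n^+$. For $J\in\mathbb{Z}^r$, $C_J$ is the set of $(d_1,\ldots,d_r)\in(B_n)^r$ with $\inf(d_t)\ge j_t$ for all $t$. For $\delta\in C_J$ and $i\in\{1,\ldots,n-1\}$, it is known that the set of simple elements $s$ with $\sigma_i\prec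 s$ and $s^{-1}\delta s\in C_J$ (componentwise conjugation) has a unique $\prec$-minimal element; this element is denoted $r_i$. *)

theory Defs
  imports Main
begin

text \<open>Braid words: a letter (j, True) is the Artin generator sigma_j, (j, False) its inverse.
  Elements of B_n are braid words modulo the congruence braid_eq n generated by free
  cancellation and the Artin relations (standard presentation of B_n).\<close>

type_synonym bword = "(nat \<times> bool) list"

definition valid_word :: "nat \<Rightarrow> bword \<Rightarrow> bool" where
  "valid_word n w = (\<forall>x\<in>set w. 1 \<le> fst x \<and> fst x < n)"

inductive braid_eq :: "nat \<Rightarrow> bword \<Rightarrow> bword \<Rightarrow> bool" for n :: nat where
  be_refl: "braid_eq n w w"
| be_sym: "braid_eq n x y \<Longrightarrow> braid_eq n y x"
| be_trans: "braid_eq n x y \<Longrightarrow> braid_eq n y z \<Longrightarrow> braid_eq n x z"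
| be_ctxt: "braid_eq n x y \<Longrightarrow> braid_eq n (u @ x @ v) (u @ y @ v)"
| be_cancel: "1 \<le> j \<Longrightarrow> j < n \<Longrightarrow> braid_eq n [(j, b), (j, \<not> b)] []"
| be_comm: "1 \<le> j \<Longrightarrow> j + 2 \<le> k \<Longrightarrow> k < n \<Longrightarrow>
             braid_eq n [(j, True), (k, True)] [(k, True), (j, True)]"
| be_braid: "1 \<le> j \<Longrightarrow> j + 1 < n \<Longrightarrow>
             braid_eq n [(j, True), (j + 1, True), (j, True)] [(j + 1, True), (j, True), (j + 1, True)]"

definition inv_word :: "bword \<Rightarrow> bword" where
  "inv_word w = rev (map (\<lambda>(j, b). (j, \<not> b)) w)"

definition positive :: "nat \<Rightarrow> bword \<Rightarrow> bool" where
  "positive n w = (\<exists>p. valid_word n p \<and> (\<forall>x\<in>set p. snd x) \<and> braid_eq n w p)"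

definition prec :: "nat \<Rightarrow> bword \<Rightarrow> bword \<Rightarrow> bool" where
  "prec n a b = (\<exists>c. positive n c \<and> braid_eq n (a @ c) b)"

definition is_lcm :: "nat \<Rightarrow> bword \<Rightarrow> bword \<Rightarrow> bword \<Rightarrow> bool" where
  "is_lcm n a b l = (positive n l \<and> prec n a l \<and> prec n b l \<and>
     (\<forall>z. positive n z \<longrightarrow> prec n a z \<longrightarrow> prec n b z \<longrightarrow> prec n l z))"

definition delta_word :: "nat \<Rightarrow> bword" where
  "delta_word n = concat (map (\<lambda>k. map (\<lambda>j. (j, True)) (rev [1..<Suc k])) [1..<n])"

definition delta_pow :: "nat \<Rightarrow> int \<Rightarrow> bword" where
  "delta_pow n k = (if 0 \<le> k then concat (replicate (nat k) (delta_word n))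
                    else concat (replicate (nat (- k)) (inv_word (delta_word n))))"

text \<open>tau^k(x) = Delta^{-k} x Delta^k, since tau(x) = Delta^{-1} x Delta.\<close>
definition tau_pow :: "nat \<Rightarrow> int \<Rightarrow> bword \<Rightarrow> bword" where
  "tau_pow n k x = delta_pow n (- k) @ x @ delta_pow n k"

definition simple :: "nat \<Rightarrow> bword \<Rightarrow> bool" where
  "simple n s = (positive n s \<and> prec n s (delta_word n))"

definition binf :: "nat \<Rightarrow> bword \<Rightarrow> int" where
  "binf n a = (GREATEST k::int. \<exists>p. positive n p \<and> braid_eq n a (delta_pow n k @ p))"

text \<open>C_J (indices t are 0-based: t < length J).\<close>
definition in_C :: "nat \<Rightarrow> int list \<Rightarrow> bword list \<Rightarrow> bool" where
  "in_C n J \<delta> = (length \<delta> = length J \<and>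
     (\<forall>t<length J. valid_word n (\<delta> ! t) \<and> J ! t \<le> binf n (\<delta> ! t)))"

definition conj_tuple :: "bword list \<Rightarrow> bword \<Rightarrow> bword list" where
  "conj_tuple \<delta> s = map (\<lambda>d. inv_word s @ d @ s) \<delta>"

definition r_set :: "nat \<Rightarrow> int list \<Rightarrow> bword list \<Rightarrow> nat \<Rightarrow> bword set" where
  "r_set n J \<delta> i = {s. valid_word n s \<and> simple n s \<and> prec n [(i, True)] s \<and>
                        in_C n J (conj_tuple \<delta> s)}"

definition minimal_in :: "nat \<Rightarrow> bword set \<Rightarrow> bword \<Rightarrow> bool" where
  "minimal_in n S s = (s \<in> S \<and> (\<forall>s'\<in>S. prec n s' s \<longrightarrow> braid_eq n s' s))"

definition is_r :: "nat \<Rightarrow> int list \<Rightarrow> bword list \<Rightarrow> nat \<Rightarrow> bword \<Rightarrow> bool" where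
  "is_r n J \<delta> i s = (minimal_in n (r_set n J \<delta> i) s \<and>
      (\<forall>s'. minimal_in n (r_set n J \<delta> i) s' \<longrightarrow> braid_eq n s' s))"

text \<open>The algorithm. D (step 1); p t are the words computed in step 2.\<close>
definition alg_D :: "nat \<Rightarrow> int list \<Rightarrow> bword list \<Rightarrow> nat set" where
  "alg_D n J \<delta> = {t. t < length J \<and> binf n (\<delta> ! t) = J ! t}"

definition alg_stop :: "nat \<Rightarrow> int list \<Rightarrow> bword list \<Rightarrow> (nat \<Rightarrow> bword) \<Rightarrow> bword \<Rightarrow> bool" where
  "alg_stop n J \<delta> p s = (\<forall>t\<in>alg_D n J \<delta>. prec n (tau_pow n (J ! t) s) (p t @ s))"

text \<open>One pass through steps 5-7 (nondeterministic in the choice of m and of the word s').\<close>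
definition alg_step :: "nat \<Rightarrow> int list \<Rightarrow> bword list \<Rightarrow> (nat \<Rightarrow> bword) \<Rightarrow> bword \<Rightarrow> bword \<Rightarrow> bool" where
  "alg_step n J \<delta> p s s2 = (\<exists>m\<in>alg_D n J \<delta>. \<not> prec n (tau_pow n (J ! m) s) (p m @ s) \<and>
     (\<exists>s'. valid_word n s' \<and> positive n s' \<and>
           is_lcm n (tau_pow n (J ! m) s) (p m @ s) (p m @ s @ s') \<and> s2 = s @ s'))"

end

theory Submission
  imports Defs
begin


definition far :: "nat \<Rightarrow> nat \<Rightarrow> bool" where "far a b \<longleftrightarrow> a + 2 \<le> b \<or> b + 2 \<le> a"
definition adj :: "nat \<Rightarrow> nat \<Rightarrow> bool" where "adj a b \<longleftrightarrow> b = a + 1 \<or> a = b + 1"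

lemma far_sym: "far a b \<Longrightarrow> far b a" by (auto simp: far_def)
lemma adj_sym: "adj a b \<Longrightarrow> adj b a" by (auto simp: adj_def)
lemma tri: "a \<noteq> b \<Longrightarrow> adj a b \<or> far a b" by (auto simp: adj_def far_def)
lemma adj_far: "adj a b \<Longrightarrow> \<not> far a b" by (auto simp: adj_def far_def)
lemma adj_neq: "adj a b \<Longrightarrow> a \<noteq> b" by (auto simp: adj_def)
lemma far_neq: "far a b \<Longrightarrow> a \<noteq> b" by (auto simp: far_def)

inductive prel :: "nat list \<Rightarrow> nat list \<Rightarrow> bool" where
  pr_far: "far a b \<Longrightarrow> prel [a,b] [b,a]"
| pr_adj: "adj a b \<Longrightarrow> prel [a,b,a] [b,a,b]"

lemma prel_sym: "prel l r \<Longrightarrow> prel r l"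
  by (induction rule: prel.induct) (auto intro: prel.intros far_sym adj_sym)

definition pstep :: "nat list \<Rightarrow> nat list \<Rightarrow> bool" where
  "pstep u v \<longleftrightarrow> (\<exists>x y l r. prel l r \<and> u = x@l@y \<and> v = x@r@y)"

abbreviation peq :: "nat list \<Rightarrow> nat list \<Rightarrow> bool" where "peq \<equiv> pstep\<^sup>*\<^sup>*"

lemma pstep_sym: "pstep u v \<Longrightarrow> pstep v u"
  unfolding pstep_def by (blast intro: prel_sym)

lemma peq_sym: "peq u v \<Longrightarrow> peq v u"
  by (induction rule: rtranclp_induct) (auto intro: pstep_sym converse_rtranclp_into_rtranclp)

lemma prel_len: "prel l r \<Longrightarrow> length l = length r"
  by (induction rule: prel.induct) auto
lemma prel_set: "prel l r \<Longrightarrow> set l = set r"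
  by (induction rule: prel.induct) auto

lemma pstep_len: "pstep u v \<Longrightarrow> length u = length v"
  unfolding pstep_def using prel_len by fastforce
lemma peq_len: "peq u v \<Longrightarrow> length u = length v"
  by (induction rule: rtranclp_induct) (auto dest: pstep_len)
lemma pstep_set: "pstep u v \<Longrightarrow> set u = set v"
  unfolding pstep_def using prel_set by fastforce
lemma peq_set: "peq u v \<Longrightarrow> set u = set v"
  by (induction rule: rtranclp_induct) (auto dest: pstep_set)

lemma pstep_app: "pstep u v \<Longrightarrow> pstep (x@u@y) (x@v@y)"
  unfolding pstep_def by (metis append.assoc)
lemma peq_app: "peq u v \<Longrightarrow> peq (x@u@y) (x@v@y)"
  by (induction rule: rtranclp_induct) (auto intro: pstep_app rtranclp.rtrancl_into_rtrancl)
lemma peq_pre: "peq u v \<Longrightarrow> peq (x@u) (x@v)"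
  using peq_app[of u v x "[]"] by simp
lemma peq_post: "peq u v \<Longrightarrow> peq (u@y) (v@y)"
  using peq_app[of u v "[]" y] by simp
lemma peq_cons: "peq u v \<Longrightarrow> peq (a#u) (a#v)"
  using peq_pre[of u v "[a]"] by simp
lemma peq_cong: "peq a a' \<Longrightarrow> peq b b' \<Longrightarrow> peq (a@b) (a'@b')"
  by (meson peq_post peq_pre rtranclp_trans)

lemma sw: "far a b \<Longrightarrow> peq (x @ a # b # y) (x @ b # a # y)"
proof -
  assume "far a b"
  hence "pstep (x @ [a,b] @ y) (x @ [b,a] @ y)" unfolding pstep_def by (blast intro: pr_far)
  thus ?thesis by simp
qed
lemma br: "adj a b \<Longrightarrow> peq (x @ a # b # a # y) (x @ b # a # b # y)"
proof -
  assume "adj a b"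
  hence "pstep (x @ [a,b,a] @ y) (x @ [b,a,b] @ y)" unfolding pstep_def by (blast intro: pr_adj)
  thus ?thesis by simp
qed
lemma sw0: "far a b \<Longrightarrow> peq (a # b # y) (b # a # y)" using sw[of a b "[]"] by simp
lemma br0: "adj a b \<Longrightarrow> peq (a # b # a # y) (b # a # b # y)" using br[of a b "[]"] by simp

definition cp :: "nat \<Rightarrow> nat \<Rightarrow> nat list" where
  "cp a b = (if a = b then [] else if adj a b then [b,a] else [b])"

lemma cp_eq[simp]: "cp a a = []" by (simp add: cp_def)
lemma cp_adj: "adj a b \<Longrightarrow> cp a b = [b,a]" by (simp add: cp_def adj_neq)
lemma cp_far: "far a b \<Longrightarrow> cp a b = [b]" by (auto simp: cp_def adj_far far_neq)

lemma pstep_cons_cases: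
  assumes "pstep (k#V) (j#Y)"
  shows "(k = j \<and> pstep V Y) \<or> (far k j \<and> (\<exists>b. V = j#b \<and> Y = k#b))
        \<or> (adj k j \<and> (\<exists>b. V = j#k#b \<and> Y = k#j#b))"
proof -
  obtain x y l r where pr: "prel l r" and u: "k#V = x@l@y" and v: "j#Y = x@r@y"
    using assms unfolding pstep_def by blast
  show ?thesis
  proof (cases x)
    case (Cons c x')
    then have "k = j" "V = x'@l@y" "Y = x'@r@y" using u v by auto
    then show ?thesis using pr unfolding pstep_def by blast
  next
    case Nil
    from pr show ?thesis
    proof cases
      case (pr_far a b)
      then show ?thesis using u v Nil by auto
    next
      case (pr_adj a b)
      then show ?thesis using u v Nil by auto
    qed
  qed
qed

lemma peq_refl[simp]: "peq u u" by simp

lemma garside_step: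
  assumes H: "\<And>X' a b Y'. length X' < length X \<Longrightarrow> peq (a#X') (b#Y') \<Longrightarrow>
                 \<exists>Z. peq X' (cp a b @ Z) \<and> peq Y' (cp b a @ Z)"
  and Z1a: "peq X (cp i k @ Z1)" and Z1b: "peq V (cp k i @ Z1)"
  and st: "pstep (k#V) (j#Y)" and len: "length V = length X"
  shows "\<exists>Z. peq X (cp i j @ Z) \<and> peq Y (cp j i @ Z)"
proof -
  have lZ1: "length X = length (cp i k @ Z1)" using peq_len[OF Z1a] .
  consider (A) "k = j" "pstep V Y" | (B) b where "far k j" "V = j#b" "Y = k#b"
    | (C) b where "adj k j" "V = j#k#b" "Y = k#j#b"
    using pstep_cons_cases[OF st] by blast
  then show ?thesis
  proof cases
    case A
    then have "peq Y (cp j i @ Z1)" using Z1b by (meson pstep_sym r_into_rtranclp rtranclp_trans)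
    then show ?thesis using Z1a A by blast
  next
    case (B b)
    show ?thesis
    proof (cases "i = k")
      case True
      then have "peq X (j#b)" using Z1a Z1b B by simp (meson peq_sym rtranclp_trans)
      then show ?thesis using B True by (auto simp: cp_far far_sym intro!: exI[of _ b])
    next
      case False
      then consider "far i k" | "adj i k" using tri by blast
      then show ?thesis
      proof cases
        case 1
        have X1: "peq X (k#Z1)" using Z1a 1 by (simp add: cp_far)
        have V1: "peq (j#b) (i#Z1)" using Z1b 1 B by (simp add: cp_far far_sym)
        obtain Z2 where Z2: "peq b (cp j i @ Z2)" "peq Z1 (cp i j @ Z2)"
          using H[OF _ V1] len B by auto
        consider "i = j" | "far i j" | "adj i j" using tri by blast
        then show ?thesis
        proof cases
          case 1
          have "peq X (k#Z2)" using X1 Z2 1 by simp (meson peq_cons rtranclp_trans)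
          moreover have "peq Y (k#Z2)" using B Z2 1 by (simp add: peq_cons)
          ultimately show ?thesis using 1 by auto
        next
          case 2
          have "peq X (k#Z1)" by (rule X1)
          also have "peq \<dots> (k#j#Z2)" using Z2 2 by (simp add: cp_far peq_cons)
          also have "peq \<dots> (j#k#Z2)" using B by (simp add: sw0)
          finally have a: "peq X (j#k#Z2)" .
          have "peq Y (k#i#Z2)" using B Z2 2 by (simp add: cp_far far_sym peq_cons)
          also have "peq \<dots> (i#k#Z2)" using `far i k` by (simp add: sw0 far_sym)
          finally show ?thesis using a 2 by (auto simp: cp_far far_sym)
        next
          case 3
          have "peq X (k#Z1)" by (rule X1)
          also have "peq \<dots> (k#j#i#Z2)" using Z2 3 by (simp add: cp_adj peq_cons)
          also have "peq \<dots> (j#k#i#Z2)" using B by (simp add: sw0)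
          also have "peq \<dots> (j#i#k#Z2)" using `far i k` sw[of k i "[j]"] by (simp add: far_sym)
          finally have a: "peq X (j#i#k#Z2)" .
          have "peq Y (k#i#j#Z2)" using B Z2 3 by (simp add: cp_adj adj_sym peq_cons)
          also have "peq \<dots> (i#k#j#Z2)" using `far i k` by (simp add: sw0 far_sym)
          also have "peq \<dots> (i#j#k#Z2)" using B sw[of k j "[i]"] by simp
          finally show ?thesis using a 3 by (auto simp: cp_adj adj_sym)
        qed
      next
        case 2
        have X1: "peq X (k#i#Z1)" using Z1a 2 by (simp add: cp_adj)
        have V1: "peq (j#b) (i#k#Z1)" using Z1b 2 B by (simp add: cp_adj adj_sym)
        obtain Z2 where Z2: "peq b (cp j i @ Z2)" "peq (k#Z1) (cp i j @ Z2)"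
          using H[OF _ V1] len B by auto
        have lb: "length b = length (cp j i @ Z2)" using peq_len[OF Z2(1)] .
        consider "i = j" | "far i j" | "adj i j" using tri by blast
        then show ?thesis
        proof cases
          case 1 then show ?thesis using 2 B by (metis adj_far far_sym)
        next
          case 3
          have k1: "peq (k#Z1) (j#i#Z2)" using Z2 3 by (simp add: cp_adj)
          obtain Z3 where Z3: "peq Z1 (cp k j @ Z3)" "peq (i#Z2) (cp j k @ Z3)"
            using H[OF _ k1] lZ1 2 by (auto simp: cp_adj)
          have Z3': "peq Z1 (j#Z3)" "peq (i#Z2) (k#Z3)" using Z3 B by (auto simp: cp_far far_sym)
          obtain Z4 where Z4: "peq Z2 (cp i k @ Z4)" "peq Z3 (cp k i @ Z4)"
            using H[OF _ Z3'(2)] lZ1 lb 2 3 B len by (auto simp: cp_adj adj_sym)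
          have Z4': "peq Z2 (k#i#Z4)" "peq Z3 (i#k#Z4)" using Z4 2 by (auto simp: cp_adj adj_sym)
          have "peq X (k#i#Z1)" by (rule X1)
          also have "peq \<dots> (k#i#j#Z3)" using Z3' by (simp add: peq_cons)
          also have "peq \<dots> (k#i#j#i#k#Z4)" using Z4' by (simp add: peq_cons)
          also have "peq \<dots> (k#j#i#j#k#Z4)" using br[of i j "[k]"] 3 by simp
          also have "peq \<dots> (j#k#i#j#k#Z4)" using B by (simp add: sw0)
          also have "peq \<dots> (j#k#i#k#j#Z4)" using sw[of j k "[j,k,i]"] B by (simp add: far_sym)
          also have "peq \<dots> (j#i#k#i#j#Z4)" using br[of k i "[j]"] 2 by (simp add: adj_sym)
          finally have a: "peq X (j#i#(k#i#j#Z4))" .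
          have "peq Y (k#i#j#Z2)" using B Z2 3 by (simp add: cp_adj adj_sym peq_cons)
          also have "peq \<dots> (k#i#j#k#i#Z4)" using Z4' by (simp add: peq_cons)
          also have "peq \<dots> (k#i#k#j#i#Z4)" using sw[of j k "[k,i]"] B by (simp add: far_sym)
          also have "peq \<dots> (i#k#i#j#i#Z4)" using br[of k i "[]"] 2 by (simp add: adj_sym)
          also have "peq \<dots> (i#k#j#i#j#Z4)" using br[of i j "[i,k]"] 3 by simp
          also have "peq \<dots> (i#j#k#i#j#Z4)" using sw[of k j "[i]"] B by simp
          finally show ?thesis using a 3 by (auto simp: cp_adj adj_sym)
        next
          case 4: 2
          have k1: "peq (k#Z1) (j#Z2)" using Z2 4 by (simp add: cp_far)
          obtain Z3 where Z3: "peq Z1 (cp k j @ Z3)" "peq Z2 (cp j k @ Z3)"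
            using H[OF _ k1] lZ1 2 by (auto simp: cp_adj)
          have Z3': "peq Z1 (j#Z3)" "peq Z2 (k#Z3)" using Z3 B by (auto simp: cp_far far_sym)
          have "peq X (k#i#Z1)" by (rule X1)
          also have "peq \<dots> (k#i#j#Z3)" using Z3' by (simp add: peq_cons)
          also have "peq \<dots> (k#j#i#Z3)" using sw[of i j "[k]"] 4 by simp
          also have "peq \<dots> (j#k#i#Z3)" using B by (simp add: sw0)
          finally have a: "peq X (j#(k#i#Z3))" .
          have "peq Y (k#i#Z2)" using B Z2 4 by (simp add: cp_far far_sym peq_cons)
          also have "peq \<dots> (k#i#k#Z3)" using Z3' by (simp add: peq_cons)
          also have "peq \<dots> (i#k#i#Z3)" using br[of k i "[]"] 2 by (simp add: adj_sym)
          finally show ?thesis using a 4 by (auto simp: cp_far far_sym)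
        qed
      qed
    qed
  next
    case (C b)
    show ?thesis
    proof (cases "i = k")
      case True
      then have "peq X (j#k#b)" using Z1a Z1b C by simp (meson peq_sym rtranclp_trans)
      then show ?thesis using C True by (auto simp: cp_adj adj_sym intro!: exI[of _ b])
    next
      case False
      then consider "far i k" | "adj i k" using tri by blast
      then show ?thesis
      proof cases
        case 1
        have X1: "peq X (k#Z1)" using Z1a 1 by (simp add: cp_far)
        have V1: "peq (j#k#b) (i#Z1)" using Z1b 1 C by (simp add: cp_far far_sym)
        obtain Z2 where Z2: "peq (k#b) (cp j i @ Z2)" "peq Z1 (cp i j @ Z2)"
          using H[OF _ V1] len C by auto
        consider "i = j" | "far i j" | "adj i j" using tri by blast
        then show ?thesis
        proof cases
          case 1 then show ?thesis using `far i k` C by (metis adj_far far_sym)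
        next
          case 2
          have k1: "peq (k#b) (i#Z2)" using Z2 2 by (simp add: cp_far far_sym)
          obtain Z3 where Z3: "peq b (cp k i @ Z3)" "peq Z2 (cp i k @ Z3)"
            using H[OF _ k1] len C by auto
          have Z3': "peq b (i#Z3)" "peq Z2 (k#Z3)" using Z3 1 by (auto simp: cp_far far_sym)
          have "peq X (k#Z1)" by (rule X1)
          also have "peq \<dots> (k#j#Z2)" using Z2 2 by (simp add: cp_far peq_cons)
          also have "peq \<dots> (k#j#k#Z3)" using Z3' by (simp add: peq_cons)
          also have "peq \<dots> (j#k#j#Z3)" using br[of k j "[]"] C by simp
          finally have a: "peq X (j#(k#j#Z3))" .
          have "peq Y (k#j#i#Z3)" using C Z3' by (simp add: peq_cons)
          also have "peq \<dots> (k#i#j#Z3)" using sw[of j i "[k]"] 2 by (simp add: far_sym)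
          also have "peq \<dots> (i#k#j#Z3)" using sw[of k i "[]"] 1 by (simp add: far_sym)
          finally show ?thesis using a 2 by (auto simp: cp_far far_sym)
        next
          case 3
          have k1: "peq (k#b) (i#j#Z2)" using Z2 3 by (simp add: cp_adj adj_sym)
          obtain Z3 where Z3: "peq b (cp k i @ Z3)" "peq (j#Z2) (cp i k @ Z3)"
            using H[OF _ k1] len C by auto
          have Z3': "peq b (i#Z3)" "peq (j#Z2) (k#Z3)" using Z3 1 by (auto simp: cp_far far_sym)
          have lZ2: "length Z1 = length (cp i j @ Z2)" using peq_len[OF Z2(2)] .
          obtain Z4 where Z4: "peq Z2 (cp j k @ Z4)" "peq Z3 (cp k j @ Z4)"
            using H[OF _ Z3'(2)] lZ1 lZ2 1 3 by (auto simp: cp_far cp_adj)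
          have Z4': "peq Z2 (k#j#Z4)" "peq Z3 (j#k#Z4)" using Z4 C by (auto simp: cp_adj adj_sym)
          have "peq X (k#Z1)" by (rule X1)
          also have "peq \<dots> (k#j#i#Z2)" using Z2 3 by (simp add: cp_adj peq_cons)
          also have "peq \<dots> (k#j#i#k#j#Z4)" using Z4' by (simp add: peq_cons)
          also have "peq \<dots> (k#j#k#i#j#Z4)" using sw[of i k "[k,j]"] 1 by simp
          also have "peq \<dots> (j#k#j#i#j#Z4)" using br[of k j "[]"] C by simp
          also have "peq \<dots> (j#k#i#j#i#Z4)" using br[of j i "[j,k]"] 3 by (simp add: adj_sym)
          also have "peq \<dots> (j#i#k#j#i#Z4)" using sw[of k i "[j]"] 1 by (simp add: far_sym)
          finally have a: "peq X (j#i#(k#j#i#Z4))" .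
          have "peq Y (k#j#i#Z3)" using C Z3' by (simp add: peq_cons)
          also have "peq \<dots> (k#j#i#j#k#Z4)" using Z4' by (simp add: peq_cons)
          also have "peq \<dots> (k#i#j#i#k#Z4)" using br[of j i "[k]"] 3 by (simp add: adj_sym)
          also have "peq \<dots> (i#k#j#i#k#Z4)" using sw[of k i "[]"] 1 by (simp add: far_sym)
          also have "peq \<dots> (i#k#j#k#i#Z4)" using sw[of i k "[i,k,j]"] 1 by simp
          also have "peq \<dots> (i#j#k#j#i#Z4)" using br[of k j "[i]"] C by simp
          finally show ?thesis using a 3 by (auto simp: cp_adj adj_sym)
        qed
      next
        case 2
        have X1: "peq X (k#i#Z1)" using Z1a 2 by (simp add: cp_adj)
        have V1: "peq (j#k#b) (i#k#Z1)" using Z1b 2 C by (simp add: cp_adj adj_sym)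
        obtain Z2 where Z2: "peq (k#b) (cp j i @ Z2)" "peq (k#Z1) (cp i j @ Z2)"
          using H[OF _ V1] len C by auto
        consider "i = j" | "far i j" | "adj i j" using tri by blast
        then show ?thesis
        proof cases
          case 1
          have kk: "peq (k#b) (k#Z1)" using Z2 1 by simp (meson peq_sym rtranclp_trans)
          obtain Z3 where Z3: "peq b Z3" "peq Z1 Z3" using H[OF _ kk] len C by auto
          have "peq b Z1" using Z3 by (meson peq_sym rtranclp_trans)
          then have "peq Y (k#i#Z1)" using C 1 by (simp add: peq_cons)
          then show ?thesis using X1 1 by auto
        next
          case 3 then show ?thesis using 2 C
            by (auto simp: adj_def)
        next
          case 4: 2
          have k1: "peq (k#b) (i#Z2)" and k2: "peq (k#Z1) (j#Z2)" using Z2 4 by (simp_all add: cp_far far_sym)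
          obtain Z3 where Z3: "peq b (cp k i @ Z3)" "peq Z2 (cp i k @ Z3)"
            using H[OF _ k1] len C by auto
          have Z3': "peq b (i#k#Z3)" "peq Z2 (k#i#Z3)" using Z3 2 by (auto simp: cp_adj adj_sym)
          obtain Z4 where Z4: "peq Z1 (cp k j @ Z4)" "peq Z2 (cp j k @ Z4)"
            using H[OF _ k2] lZ1 2 by (auto simp: cp_adj)
          have Z4': "peq Z1 (j#k#Z4)" "peq Z2 (k#j#Z4)" using Z4 C by (auto simp: cp_adj adj_sym)
          have kk: "peq (k#i#Z3) (k#j#Z4)" using Z3' Z4' by (meson peq_sym rtranclp_trans)
          have lb: "length b = length (i#k#Z3)" using peq_len[OF Z3'(1)] .
          obtain Z5 where Z5: "peq (i#Z3) Z5" "peq (j#Z4) Z5" using H[OF _ kk] len C lb by auto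
          have ij: "peq (i#Z3) (j#Z4)" using Z5 by (meson peq_sym rtranclp_trans)
          obtain Z6 where Z6: "peq Z3 (cp i j @ Z6)" "peq Z4 (cp j i @ Z6)"
            using H[OF _ ij] len C lb by auto
          have Z6': "peq Z3 (j#Z6)" "peq Z4 (i#Z6)" using Z6 4 by (auto simp: cp_far far_sym)
          have "peq X (k#i#Z1)" by (rule X1)
          also have "peq \<dots> (k#i#j#k#Z4)" using Z4' by (simp add: peq_cons)
          also have "peq \<dots> (k#i#j#k#i#Z6)" using Z6' by (simp add: peq_cons)
          also have "peq \<dots> (k#j#i#k#i#Z6)" using sw[of i j "[k]"] 4 by simp
          also have "peq \<dots> (k#j#k#i#k#Z6)" using br[of i k "[k,j]"] 2 by simp
          also have "peq \<dots> (j#k#j#i#k#Z6)" using br[of k j "[]"] C by simp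
          finally have a: "peq X (j#(k#j#i#k#Z6))" .
          have "peq Y (k#j#i#k#Z3)" using C Z3' by (simp add: peq_cons)
          also have "peq \<dots> (k#j#i#k#j#Z6)" using Z6' by (simp add: peq_cons)
          also have "peq \<dots> (k#i#j#k#j#Z6)" using sw[of j i "[k]"] 4 by (simp add: far_sym)
          also have "peq \<dots> (k#i#k#j#k#Z6)" using br[of j k "[k,i]"] C by (simp add: adj_sym)
          also have "peq \<dots> (i#k#i#j#k#Z6)" using br[of k i "[]"] 2 by (simp add: adj_sym)
          also have "peq \<dots> (i#k#j#i#k#Z6)" using sw[of i j "[i,k]"] 4 by simp
          finally show ?thesis using a 4 by (auto simp: cp_far far_sym)
        qed
      qed
    qed
  qed
qed


lemma garside: "peq (i#X) (j#Y) \<Longrightarrow> \<exists>Z. peq X (cp i j @ Z) \<and> peq Y (cp j i @ Z)"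
proof (induction "length X" arbitrary: i j X Y rule: less_induct)
  case less
  have H: "\<And>X' a b Y'. length X' < length X \<Longrightarrow> peq (a#X') (b#Y') \<Longrightarrow>
                 \<exists>Z. peq X' (cp a b @ Z) \<and> peq Y' (cp b a @ Z)" using less.hyps by blast
  have "\<forall>j Y. W = j#Y \<longrightarrow> (\<exists>Z. peq X (cp i j @ Z) \<and> peq Y (cp j i @ Z))" if "peq (i#X) W" for W
    using that
  proof (induction rule: rtranclp_induct)
    case base then show ?case by auto
  next
    case (step W W')
    show ?case
    proof (intro allI impI)
      fix j Y assume W': "W' = j#Y"
      obtain k V where W: "W = k#V" using peq_len[OF step.hyps(1)] by (cases W) auto
      obtain Z1 where Z1: "peq X (cp i k @ Z1)" "peq V (cp k i @ Z1)" using step.IH W by blast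
      have "length V = length X" using peq_len[OF step.hyps(1)] W by simp
      then show "\<exists>Z. peq X (cp i j @ Z) \<and> peq Y (cp j i @ Z)"
        using garside_step[OF H Z1] step.hyps(2) W W' by blast
    qed
  qed
  then show ?case using less.prems by blast
qed

lemma peq_cancel_cons: "peq (a#X) (a#Y) \<Longrightarrow> peq X Y"
proof -
  assume "peq (a#X) (a#Y)"
  then obtain Z where "peq X Z" "peq Y Z" using garside[of a X a Y] by auto
  then show ?thesis by (meson peq_sym rtranclp_trans)
qed

lemma peq_lcancel: "peq (x@X) (x@Y) \<Longrightarrow> peq X Y"
  by (induction x) (auto dest: peq_cancel_cons)

lemma prel_rev: "prel l r \<Longrightarrow> prel (rev l) (rev r)"
  by (induction rule: prel.induct) (auto intro: prel.intros far_sym prel_sym)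

lemma pstep_rev: "pstep u v \<Longrightarrow> pstep (rev u) (rev v)"
  unfolding pstep_def by (metis append.assoc prel_rev rev_append)

lemma peq_rev: "peq u v \<Longrightarrow> peq (rev u) (rev v)"
  by (induction rule: rtranclp_induct) (auto intro: pstep_rev rtranclp.rtrancl_into_rtrancl)

lemma peq_rcancel: "peq (X@x) (Y@x) \<Longrightarrow> peq X Y"
proof -
  assume "peq (X@x) (Y@x)"
  then have "peq (rev x @ rev X) (rev x @ rev Y)" using peq_rev by fastforce
  then have "peq (rev X) (rev Y)" by (rule peq_lcancel)
  then show ?thesis using peq_rev by fastforce
qed

subsection \<open>Delta in the monoid\<close>

definition Pm :: "nat \<Rightarrow> nat list" where "Pm m = rev [1..<Suc m]"
definition Qm :: "nat \<Rightarrow> nat list" where "Qm m = [1..<Suc m]"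
definition dw :: "nat \<Rightarrow> nat list" where "dw n = concat (map Pm [1..<n])"

lemma Pm_0[simp]: "Pm 0 = []" by (simp add: Pm_def)
lemma Pm_Suc: "Pm (Suc m) = Suc m # Pm m" by (simp add: Pm_def)
lemma Qm_Suc: "Qm (Suc m) = Qm m @ [Suc m]" by (simp add: Qm_def)
lemma set_Pm: "set (Pm m) = {1..m}" by (auto simp: Pm_def)
lemma rev_Pm: "rev (Pm m) = Qm m" by (simp add: Pm_def Qm_def)
lemma dw_Suc: "1 \<le> m \<Longrightarrow> dw (Suc m) = dw m @ Pm m" by (simp add: dw_def)
lemma dw_le1: "m \<le> 1 \<Longrightarrow> dw m = []" by (simp add: dw_def)
lemma set_dw: "set (dw n) = {1..<n}"
  by (induction n) (auto simp: dw_def set_Pm)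
lemma Pm_last: "1 \<le> m \<Longrightarrow> \<exists>c. Pm m = c @ [1]"
  by (cases m) (auto simp: Pm_def upt_rec)

lemma dw2: "dw 2 = [1]"
proof -
  show ?thesis by (simp add: dw_def Pm_def numeral_2_eq_2)
qed

lemma comm_all: "(\<forall>x\<in>set W. far a x) \<Longrightarrow> peq (a#W) (W@[a])"
proof (induction W)
  case Nil then show ?case by simp
next
  case (Cons b W)
  have "peq (a#b#W) (b#a#W)" using Cons.prems by (simp add: sw0)
  also have "peq \<dots> (b#W@[a])" using Cons by (simp add: peq_cons)
  finally show ?case by simp
qed

lemma lemA: "1 \<le> j \<Longrightarrow> j < m \<Longrightarrow> peq (j # Pm m) (Pm m @ [j+1])"
proof (induction m arbitrary: j)
  case 0 then show ?case by simp
next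
  case (Suc m)
  show ?case
  proof (cases "j < m")
    case True
    have "peq (j # Pm (Suc m)) (Suc m # j # Pm m)" using True by (simp add: Pm_Suc sw0 far_def)
    also have "peq \<dots> (Suc m # Pm m @ [j+1])" using Suc True by (simp add: peq_cons)
    finally show ?thesis by (simp add: Pm_Suc)
  next
    case False
    then have jm: "j = m" "1 \<le> m" using Suc by auto
    then obtain m' where m': "m = Suc m'" by (cases m) auto
    have "peq (j # Pm (Suc m)) (m # Suc m # m # Pm m')" using jm m' by (simp add: Pm_Suc)
    also have "peq \<dots> (Suc m # m # Suc m # Pm m')" using br0[of m "Suc m"] by (simp add: adj_def)
    also have "peq \<dots> (Suc m # m # Pm m' @ [Suc m])"
      using comm_all[of "Pm m'" "Suc m"] m' by (auto simp: set_Pm far_def intro!: peq_cons)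
    finally show ?thesis using jm m' by (simp add: Pm_Suc)
  qed
qed

lemma lemA': "1 \<le> j \<Longrightarrow> j < m \<Longrightarrow> peq (Qm m @ [j]) ((j+1) # Qm m)"
  using peq_rev[OF lemA[of j m]] by (simp add: rev_Pm)

lemma lemB: "1 \<le> m \<Longrightarrow> peq (dw (Suc m)) (Qm m @ dw m)"
proof (induction m rule: nat_induct_at_least)
  case base then show ?case by (simp add: dw_def Pm_def Qm_def)
next
  case (Suc m)
  have "dw (Suc (Suc m)) = dw (Suc m) @ Pm (Suc m)" by (simp add: dw_Suc)
  also have "peq \<dots> (Qm m @ dw m @ Pm (Suc m))" using peq_post[OF Suc.IH] by simp
  also have "Qm m @ dw m @ Pm (Suc m) = Qm m @ (dw m @ [Suc m]) @ Pm m" by (simp add: Pm_Suc)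
  also have "peq \<dots> (Qm m @ (Suc m # dw m) @ Pm m)"
    using comm_all[of "dw m" "Suc m"] by (intro peq_app) (rule peq_sym, auto simp: set_dw far_def)
  also have "\<dots> = Qm (Suc m) @ dw (Suc m)" using Suc by (simp add: Qm_Suc dw_Suc)
  finally show ?case .
qed

lemma lemD2: "2 \<le> n \<Longrightarrow> 1 \<le> j \<Longrightarrow> j < n \<Longrightarrow> peq (j # dw n) (dw n @ [n-j])"
proof (induction n arbitrary: j rule: nat_induct_at_least)
  case base then have "j = 1" by simp
  then show ?case using dw2 by simp
next
  case (Suc n)
  show ?case
  proof (cases "j < n")
    case True
    have "j # dw (Suc n) = (j # dw n) @ Pm n" using Suc by (simp add: dw_Suc)
    also have "peq \<dots> ((dw n @ [n-j]) @ Pm n)" using Suc True by (intro peq_post) auto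
    also have "\<dots> = dw n @ ((n-j) # Pm n)" by simp
    also have "peq \<dots> (dw n @ (Pm n @ [n-j+1]))" using True Suc lemA[of "n-j" n] by (intro peq_pre) auto
    finally show ?thesis using Suc True by (simp add: dw_Suc Suc_diff_le)
  next
    case False
    then have jn: "j = n" using Suc by auto
    have "peq (j # dw (Suc n)) (j # Qm n @ dw n)" using lemB Suc by (simp add: peq_cons)
    also have "peq \<dots> (Qm n @ (j-1) # dw n)"
    proof -
      have e1: "peq (Qm n @ [j-1]) (j # Qm n)" using lemA'[of "j-1" n] jn Suc by simp
      have "peq ((Qm n @ [j-1]) @ dw n) ((j # Qm n) @ dw n)" by (rule peq_post[OF e1])
      then have "peq (Qm n @ (j-1) # dw n) (j # Qm n @ dw n)" by simp
      then show ?thesis by (rule peq_sym)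
    qed
    also have "peq \<dots> (Qm n @ dw n @ [n - (j-1)])"
    proof (rule peq_pre)
      have "n - (n - 1) = (1::nat)" using Suc by simp
      then show "peq ((j - 1) # dw n) (dw n @ [n - (j - 1)])" using Suc.IH[of "n-1"] Suc.hyps jn by simp
    qed
    also have "peq \<dots> (dw (Suc n) @ [n - (j-1)])"
    proof -
      have "peq (dw (Suc n) @ [n-(j-1)]) ((Qm n @ dw n) @ [n-(j-1)])"
        using lemB[of n] Suc by (intro peq_post) simp
      then have "peq (dw (Suc n) @ [n-(j-1)]) (Qm n @ dw n @ [n-(j-1)])" by simp
      then show ?thesis by (rule peq_sym)
    qed
    finally show ?thesis using jn Suc by simp
  qed
qed

lemma lemD1: "2 \<le> n \<Longrightarrow> 1 \<le> j \<Longrightarrow> j < n \<Longrightarrow> \<exists>c. peq (dw n) (c @ [j])"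
proof (induction n arbitrary: j rule: nat_induct_at_least)
  case base then have "j = 1" by simp
  then show ?case using dw2 by (auto intro!: exI[of _ "[]"])
next
  case (Suc n)
  show ?case
  proof (cases "j = 1")
    case True
    obtain c where "Pm n = c @ [1]" using Pm_last Suc by fastforce
    then show ?thesis using True Suc by (auto simp: dw_Suc intro!: exI[of _ "dw n @ c"])
  next
    case False
    then obtain c where c: "peq (dw n) (c @ [j-1])" using Suc by fastforce
    have "dw (Suc n) = dw n @ Pm n" using Suc by (simp add: dw_Suc)
    also have "peq \<dots> (c @ ((j-1) # Pm n))" using peq_post[OF c] by simp
    also have "peq \<dots> (c @ (Pm n @ [j]))" using lemA[of "j-1" n] False Suc by (intro peq_pre) auto
    finally show ?thesis by (metis append.assoc)
  qed
qed

definition cj :: "nat \<Rightarrow> nat \<Rightarrow> nat list" where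
  "cj n j = (SOME c. peq (dw n) (c @ [j]))"

lemma cj: "2 \<le> n \<Longrightarrow> 1 \<le> j \<Longrightarrow> j < n \<Longrightarrow> peq (dw n) (cj n j @ [j])"
  unfolding cj_def by (rule someI_ex) (rule lemD1)

lemma cj2: "2 \<le> n \<Longrightarrow> 1 \<le> j \<Longrightarrow> j < n \<Longrightarrow> peq (dw n) ((n-j) # cj n j)"
proof -
  assume a: "2 \<le> n" "1 \<le> j" "j < n"
  have "peq ((n-j) # dw n) (dw n @ [j])" using lemD2[of n "n-j"] a by auto
  moreover have "peq ((n-j) # dw n) (((n-j) # cj n j) @ [j])" using cj[OF a] by (simp add: peq_cons)
  ultimately have "peq (dw n @ [j]) (((n-j) # cj n j) @ [j])" by (meson peq_sym rtranclp_trans)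
  then show ?thesis by (rule peq_rcancel)
qed

lemma set_cj: "2 \<le> n \<Longrightarrow> 1 \<le> j \<Longrightarrow> j < n \<Longrightarrow> set (cj n j) \<subseteq> {1..<n}"
  using peq_set[OF cj] set_dw by auto

lemma dw_left: "2 \<le> n \<Longrightarrow> 1 \<le> j \<Longrightarrow> j < n \<Longrightarrow> \<exists>c. peq (dw n) (j # c)"
proof -
  assume a: "2 \<le> n" "1 \<le> j" "j < n"
  have e: "n - (n-j) = j" using a by simp
  have "peq (dw n) ((n-(n-j)) # cj n (n-j))" using cj2[of n "n-j"] a by simp
  then show ?thesis unfolding e by blast
qed




definition pw :: "nat list \<Rightarrow> bword" where "pw A = map (\<lambda>j. (j, True)) A"
definition vl :: "nat \<Rightarrow> nat list \<Rightarrow> bool" where "vl n A = (\<forall>x\<in>set A. 1 \<le> x \<and> x < n)"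
definition tpx :: "nat \<Rightarrow> nat \<Rightarrow> nat list \<Rightarrow> nat list" where
  "tpx n k X = (if even k then X else map (\<lambda>j. n - j) X)"
definition dpow :: "nat \<Rightarrow> nat \<Rightarrow> nat list" where "dpow n k = concat (replicate k (dw n))"

fun F :: "nat \<Rightarrow> bword \<Rightarrow> nat \<times> nat list" where
  "F n [] = (0, [])"
| "F n ((j,b)#w) = (case F n w of (k,A) \<Rightarrow>
      if b then (k, tpx n k [j] @ A) else (Suc k, tpx n k (cj n j) @ A))"

definition eqv :: "nat \<Rightarrow> nat \<times> nat list \<Rightarrow> nat \<times> nat list \<Rightarrow> bool" where
  "eqv n P Q = peq (dpow n (fst Q) @ snd P) (dpow n (fst P) @ snd Q)"

definition comb :: "nat \<Rightarrow> nat \<times> nat list \<Rightarrow> nat \<times> nat list \<Rightarrow> nat \<times> nat list" where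
  "comb n P Q = (fst P + fst Q, tpx n (fst Q) (snd P) @ snd Q)"

lemma vl_append[simp]: "vl n (A @ B) = (vl n A \<and> vl n B)" by (auto simp: vl_def)
lemma vl_Cons[simp]: "vl n (a # B) = (1 \<le> a \<and> a < n \<and> vl n B)" by (auto simp: vl_def)
lemma vl_Nil[simp]: "vl n []" by (simp add: vl_def)

lemma tpx_vl: "vl n X \<Longrightarrow> vl n (tpx n k X)" by (auto simp: vl_def tpx_def)
lemma tpx_append[simp]: "tpx n k (A @ B) = tpx n k A @ tpx n k B" by (simp add: tpx_def)
lemma tpx_Nil[simp]: "tpx n k [] = []" by (simp add: tpx_def)
lemma tpx_0[simp]: "tpx n 0 X = X" by (simp add: tpx_def)
lemma tpx_tpx: "vl n X \<Longrightarrow> tpx n a (tpx n b X) = tpx n (a+b) X"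
proof -
  assume "vl n X"
  then have "map (\<lambda>j. n - j) (map (\<lambda>j. n - j) X) = X"
    by (induction X) auto
  then show ?thesis by (auto simp: tpx_def)
qed

lemma dpow_add: "dpow n (a+b) = dpow n a @ dpow n b" by (simp add: dpow_def replicate_add)
lemma dpow_comm: "dpow n a @ dpow n b = dpow n b @ dpow n a"
  by (metis add.commute dpow_add)
lemma dpow_Suc: "dpow n (Suc l) = dw n @ dpow n l" by (simp add: dpow_def)
lemma dpow_0[simp]: "dpow n 0 = []" by (simp add: dpow_def)
lemma dpow_1: "dpow n 1 = dw n" by (simp add: dpow_def)

lemma L3: "2 \<le> n \<Longrightarrow> vl n X \<Longrightarrow> peq (X @ dw n) (dw n @ tpx n 1 X)"
proof (induction X)
  case Nil then show ?case by (simp add: tpx_def)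
next
  case (Cons x X)
  have "peq ((x#X) @ dw n) (x # dw n @ tpx n 1 X)" using Cons by (simp add: peq_cons)
  also have "peq \<dots> ((dw n @ [n-x]) @ tpx n 1 X)" using lemD2[of n x] Cons.prems
    by (metis append_Cons peq_post vl_Cons)
  finally show ?case by (simp add: tpx_def)
qed

lemma L4: "2 \<le> n \<Longrightarrow> vl n X \<Longrightarrow> peq (X @ dpow n l) (dpow n l @ tpx n l X)"
proof (induction l arbitrary: X)
  case 0 then show ?case by simp
next
  case (Suc l)
  have "X @ dpow n (Suc l) = (X @ dw n) @ dpow n l" by (simp add: dpow_Suc)
  also have "peq \<dots> ((dw n @ tpx n 1 X) @ dpow n l)" using L3 Suc.prems by (intro peq_post) auto
  also have "\<dots> = dw n @ (tpx n 1 X @ dpow n l)" by simp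
  also have "peq \<dots> (dw n @ (dpow n l @ tpx n l (tpx n 1 X)))"
    using Suc tpx_vl by (intro peq_pre) auto
  also have "\<dots> = dpow n (Suc l) @ tpx n (Suc l) X" using tpx_tpx[OF Suc.prems(2), of l 1]
    by (simp add: dpow_Suc)
  finally show ?case .
qed

lemma F_vl: "2 \<le> n \<Longrightarrow> valid_word n w \<Longrightarrow> vl n (snd (F n w))"
proof (induction w)
  case Nil then show ?case by simp
next
  case (Cons a w)
  obtain j b where a: "a = (j,b)" by (cases a)
  obtain k A where FA: "F n w = (k, A)" by (cases "F n w")
  have v: "1 \<le> j" "j < n" "valid_word n w" using Cons.prems a by (auto simp: valid_word_def)
  have "vl n A" using Cons.IH v FA Cons.prems by simp
  moreover have "vl n (cj n j)" using set_cj[of n j] v Cons.prems by (auto simp: vl_def)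
  ultimately show ?case using a FA v by (auto simp: tpx_vl)
qed

lemma F_append: "2 \<le> n \<Longrightarrow> valid_word n u \<Longrightarrow> F n (u @ v) = comb n (F n u) (F n v)"
proof (induction u)
  case Nil then show ?case by (simp add: comb_def)
next
  case (Cons a u)
  obtain j b where a: "a = (j,b)" by (cases a)
  obtain k A where FA: "F n u = (k, A)" by (cases "F n u")
  obtain l B where FB: "F n v = (l, B)" by (cases "F n v")
  have v: "1 \<le> j" "j < n" "valid_word n u" using Cons.prems a by (auto simp: valid_word_def)
  have IH: "F n (u @ v) = (k + l, tpx n l A @ B)" using Cons.IH v Cons.prems FA FB by (simp add: comb_def)
  have vA: "vl n A" using F_vl[OF Cons.prems(1) v(3)] FA by simp
  have vc: "vl n (cj n j)" using set_cj[of n j] v Cons.prems by (auto simp: vl_def)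
  have vj: "vl n [j]" using v by simp
  show ?case using a IH FA FB tpx_tpx[OF vc, of l k] tpx_tpx[OF vj, of l k]
    by (auto simp: comb_def add.commute)
qed

lemma eqv_refl: "eqv n P P" by (simp add: eqv_def dpow_comm)
lemma eqv_sym: "eqv n P Q \<Longrightarrow> eqv n Q P" by (simp add: eqv_def peq_sym)
lemma eqv_trans: "eqv n P Q \<Longrightarrow> eqv n Q R \<Longrightarrow> eqv n P R"
proof -
  assume a: "eqv n P Q" "eqv n Q R"
  obtain k A where P: "P = (k,A)" by (cases P)
  obtain l B where Q: "Q = (l,B)" by (cases Q)
  obtain m C where R: "R = (m,C)" by (cases R)
  have 1: "peq (dpow n l @ A) (dpow n k @ B)" and 2: "peq (dpow n m @ B) (dpow n l @ C)"
    using a P Q R by (auto simp: eqv_def)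
  have "dpow n l @ (dpow n m @ A) = dpow n m @ (dpow n l @ A)" by (metis append.assoc dpow_comm)
  also have "peq \<dots> (dpow n m @ (dpow n k @ B))" using 1 by (rule peq_pre)
  also have "\<dots> = dpow n k @ (dpow n m @ B)" by (metis append.assoc dpow_comm)
  also have "peq \<dots> (dpow n k @ (dpow n l @ C))" using 2 by (rule peq_pre)
  also have "\<dots> = dpow n l @ (dpow n k @ C)" by (metis append.assoc dpow_comm)
  finally have "peq (dpow n m @ A) (dpow n k @ C)" by (rule peq_lcancel)
  then show ?thesis using P R by (simp add: eqv_def)
qed

lemma comb_resp1: "2 \<le> n \<Longrightarrow> vl n (snd P) \<Longrightarrow> vl n (snd P') \<Longrightarrow> eqv n P P' \<Longrightarrow> eqv n (comb n P Q) (comb n P' Q)"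
proof -
  assume n: "2 \<le> n" and v: "vl n (snd P)" "vl n (snd P')" and e: "eqv n P P'"
  obtain k A where P: "P = (k,A)" by (cases P)
  obtain k' A' where P': "P' = (k',A')" by (cases P')
  obtain l B where Q: "Q = (l,B)" by (cases Q)
  have e': "peq (dpow n k' @ A) (dpow n k @ A')" using e P P' by (simp add: eqv_def)
  have "dpow n (k'+l) @ tpx n l A @ B = dpow n k' @ (dpow n l @ tpx n l A) @ B" by (simp add: dpow_add)
  also have "peq \<dots> (dpow n k' @ (A @ dpow n l) @ B)"
  proof -
    have vA: "vl n A" using v P by simp
    have "peq (dpow n l @ tpx n l A) (A @ dpow n l)" using peq_sym[OF L4[OF n vA, of l]] .
    then show ?thesis by (rule peq_app)
  qed
  also have "\<dots> = (dpow n k' @ A) @ dpow n l @ B" by simp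
  also have "peq \<dots> ((dpow n k @ A') @ dpow n l @ B)" using e' by (rule peq_post)
  also have "\<dots> = dpow n k @ (A' @ dpow n l) @ B" by simp
  also have "peq \<dots> (dpow n k @ (dpow n l @ tpx n l A') @ B)"
  proof -
    have "peq (A' @ dpow n l) (dpow n l @ tpx n l A')" using L4[OF n, of A' l] v P' by simp
    then show ?thesis by (rule peq_app)
  qed
  also have "\<dots> = dpow n (k+l) @ tpx n l A' @ B" by (simp add: dpow_add)
  finally show ?thesis using P P' Q by (simp add: eqv_def comb_def)
qed

lemma comb_resp2: "2 \<le> n \<Longrightarrow> vl n (snd P) \<Longrightarrow> eqv n Q Q' \<Longrightarrow> eqv n (comb n P Q) (comb n P Q')"
proof -
  assume n: "2 \<le> n" and v: "vl n (snd P)" and e: "eqv n Q Q'"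
  obtain k A where P: "P = (k,A)" by (cases P)
  obtain l B where Q: "Q = (l,B)" by (cases Q)
  obtain l' B' where Q': "Q' = (l',B')" by (cases Q')
  have vA: "vl n A" using v P by simp
  have e': "peq (dpow n l' @ B) (dpow n l @ B')" using e Q Q' by (simp add: eqv_def)
  have t1: "tpx n l' (tpx n (l + l') A) = tpx n l A"
  proof -
    have "tpx n l' (tpx n (l + l') A) = tpx n (l' + (l + l')) A" by (rule tpx_tpx[OF vA])
    also have "\<dots> = tpx n l A" by (simp add: tpx_def)
    finally show ?thesis .
  qed
  have t2: "tpx n l (tpx n (l + l') A) = tpx n l' A"
  proof -
    have "tpx n l (tpx n (l + l') A) = tpx n (l + (l + l')) A" by (rule tpx_tpx[OF vA])
    also have "\<dots> = tpx n l' A" by (simp add: tpx_def)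
    finally show ?thesis .
  qed
  have v2: "vl n (tpx n (l + l') A)" using tpx_vl[OF vA] .
  have "dpow n (k+l') @ tpx n l A @ B = dpow n k @ (dpow n l' @ tpx n l' (tpx n (l + l') A)) @ B"
    by (simp add: dpow_add t1)
  also have "peq \<dots> (dpow n k @ (tpx n (l + l') A @ dpow n l') @ B)"
    using peq_sym[OF L4[OF n v2, of l']] by (rule peq_app)
  also have "\<dots> = (dpow n k @ tpx n (l + l') A) @ (dpow n l' @ B)" by simp
  also have "peq \<dots> ((dpow n k @ tpx n (l + l') A) @ (dpow n l @ B'))" using e' by (rule peq_pre)
  also have "\<dots> = dpow n k @ (tpx n (l + l') A @ dpow n l) @ B'" by simp
  also have "peq \<dots> (dpow n k @ (dpow n l @ tpx n l (tpx n (l + l') A)) @ B')"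
    using L4[OF n v2, of l] by (rule peq_app)
  also have "\<dots> = dpow n (k+l) @ tpx n l' A @ B'" by (simp add: dpow_add t2)
  finally show ?thesis using P Q Q' by (simp add: eqv_def comb_def)
qed




declare be_trans[trans]

lemma be_app: "braid_eq n x y \<Longrightarrow> braid_eq n (u@x@v) (u@y@v)" by (rule be_ctxt)
lemma be_pre: "braid_eq n x y \<Longrightarrow> braid_eq n (u@x) (u@y)" using be_ctxt[of n x y u "[]"] by simp
lemma be_post: "braid_eq n x y \<Longrightarrow> braid_eq n (x@v) (y@v)" using be_ctxt[of n x y "[]" v] by simp
lemma be_cong: "braid_eq n a a' \<Longrightarrow> braid_eq n b b' \<Longrightarrow> braid_eq n (a@b) (a'@b')"
  by (meson be_post be_pre be_trans)

definition badf :: "nat \<Rightarrow> bword \<Rightarrow> bword" where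
  "badf n w = filter (\<lambda>p. \<not> (1 \<le> fst p \<and> fst p < n)) w"

lemma badf_be: "braid_eq n x y \<Longrightarrow> badf n x = badf n y"
  by (induction rule: braid_eq.induct) (auto simp: badf_def)

lemma valid_badf: "valid_word n w \<longleftrightarrow> badf n w = []"
  by (auto simp: valid_word_def badf_def filter_empty_conv)

lemma be_valid: "braid_eq n x y \<Longrightarrow> valid_word n x \<Longrightarrow> valid_word n y"
  using badf_be valid_badf by metis
lemma be_valid': "braid_eq n x y \<Longrightarrow> valid_word n y \<Longrightarrow> valid_word n x"
  using badf_be valid_badf by metis

lemma valid_append[simp]: "valid_word n (u@v) = (valid_word n u \<and> valid_word n v)"
  by (auto simp: valid_word_def)
lemma valid_Cons[simp]: "valid_word n (a#v) = (1 \<le> fst a \<and> fst a < n \<and> valid_word n v)"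
  by (auto simp: valid_word_def)
lemma valid_Nil[simp]: "valid_word n []" by (simp add: valid_word_def)
lemma valid_pw[simp]: "valid_word n (pw A) = vl n A" by (auto simp: valid_word_def vl_def pw_def)

lemma pw_append[simp]: "pw (A @ B) = pw A @ pw B" by (simp add: pw_def)
lemma pw_Cons: "pw (a # B) = (a, True) # pw B" by (simp add: pw_def)
lemma pw_Nil[simp]: "pw [] = []" by (simp add: pw_def)

lemma F_pw: "F n (pw A) = (0, A)"
  by (induction A) (auto simp: pw_def)

lemma F_resp: assumes n2: "2 \<le> n" shows "braid_eq n x y \<Longrightarrow> valid_word n x \<Longrightarrow> eqv n (F n x) (F n y)"
proof (induction rule: braid_eq.induct)
  case (be_refl w) show ?case by (rule eqv_refl)
next
  case (be_sym x y)
  then have "valid_word n x" using be_valid' by blast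
  then show ?case using be_sym eqv_sym by blast
next
  case (be_trans x y z)
  then show ?case using be_valid eqv_trans by blast
next
  case (be_ctxt x y u v)
  have vu: "valid_word n u" and vx: "valid_word n x" and vv: "valid_word n v" using be_ctxt.prems by auto
  have vy: "valid_word n y" using be_valid[OF be_ctxt.hyps vx] .
  have e1: "F n (u@x@v) = comb n (F n u) (comb n (F n x) (F n v))"
    using F_append[OF n2 vu] F_append[OF n2 vx] by simp
  have e2: "F n (u@y@v) = comb n (F n u) (comb n (F n y) (F n v))"
    using F_append[OF n2 vu] F_append[OF n2 vy] by simp
  have "eqv n (comb n (F n x) (F n v)) (comb n (F n y) (F n v))"
    using comb_resp1 be_ctxt.IH F_vl vx vy n2 by blast
  then show ?case unfolding e1 e2 using comb_resp2 F_vl vu n2 by blast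
next
  case (be_cancel j b)
  have vc: "vl n (cj n j)" using set_cj[of n j] be_cancel n2 by (auto simp: vl_def)
  show ?case
  proof (cases b)
    case True
    have "peq ((n-j) # cj n j) (dw n)" using peq_sym[OF cj2[of n j]] be_cancel n2 by simp
    then show ?thesis using True by (simp add: eqv_def dpow_def tpx_def)
  next
    case False
    have "peq (cj n j @ [j]) (dw n)" using peq_sym[OF cj[of n j]] be_cancel n2 by simp
    then show ?thesis using False by (simp add: eqv_def dpow_def tpx_def)
  qed
next
  case (be_comm j k)
  have "far j k" using be_comm by (simp add: far_def)
  then show ?case by (simp add: eqv_def sw0)
next
  case (be_braid j)
  have "adj j (j+1)" by (simp add: adj_def)
  then show ?case by (simp add: eqv_def br0)
qed

theorem embed: "2 \<le> n \<Longrightarrow> vl n A \<Longrightarrow> braid_eq n (pw A) (pw B) \<Longrightarrow> peq A B"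
  using F_resp[of n "pw A" "pw B"] by (simp add: F_pw eqv_def)

lemma pstep_be: "pstep u v \<Longrightarrow> vl n u \<Longrightarrow> braid_eq n (pw u) (pw v)"
proof -
  assume "pstep u v" "vl n u"
  then obtain x y l r where pr: "prel l r" and u: "u = x@l@y" and v: "v = x@r@y" and vl: "vl n l"
    unfolding pstep_def by auto
  have "braid_eq n (pw l) (pw r)" using pr vl
  proof cases
    case (pr_far a b)
    then show ?thesis
    proof (cases "a + 2 \<le> b")
      case True then show ?thesis using pr_far vl be_comm[of a b n] by (simp add: pw_def)
    next
      case False
      then have "b + 2 \<le> a" using pr_far by (simp add: far_def)
      then show ?thesis using pr_far vl be_comm[of b a n] be_sym by (simp add: pw_def)
    qed
  next
    case (pr_adj a b)
    then show ?thesis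
    proof (cases "b = a + 1")
      case True then show ?thesis using pr_adj vl be_braid[of a n] by (simp add: pw_def)
    next
      case False
      then have "a = b + 1" using pr_adj by (simp add: adj_def)
      then show ?thesis using pr_adj vl be_braid[of b n] be_sym by (simp add: pw_def)
    qed
  qed
  then show ?thesis using u v be_app by simp
qed

lemma peq_be: "peq u v \<Longrightarrow> vl n u \<Longrightarrow> braid_eq n (pw u) (pw v)"
proof (induction rule: rtranclp_induct)
  case base then show ?case by (simp add: be_refl)
next
  case (step y z)
  have "vl n y" using peq_set[OF step.hyps(1)] step.prems by (simp add: vl_def)
  then show ?case using step pstep_be be_trans by blast
qed

subsection \<open>Inverses\<close>

lemma inv_word_append[simp]: "inv_word (a@b) = inv_word b @ inv_word a" by (simp add: inv_word_def)
lemma inv_word_Cons: "inv_word ((j,b)#w) = inv_word w @ [(j, \<not>b)]" by (simp add: inv_word_def)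
lemma inv_word_Nil[simp]: "inv_word [] = []" by (simp add: inv_word_def)
lemma inv_word_inv[simp]: "inv_word (inv_word w) = w" by (induction w) (auto simp: inv_word_def)
lemma valid_inv[simp]: "valid_word n (inv_word w) = valid_word n w" by (auto simp: inv_word_def valid_word_def)

lemma inv_r: "valid_word n w \<Longrightarrow> braid_eq n (w @ inv_word w) []"
proof (induction w)
  case Nil then show ?case by (simp add: be_refl)
next
  case (Cons a w)
  obtain j b where a: "a = (j,b)" by (cases a)
  have "braid_eq n ((j,b) # (w @ inv_word w) @ [(j, \<not>b)]) ((j,b) # [] @ [(j, \<not>b)])"
    using Cons a by (intro be_app[of n _ _ "[(j,b)]", simplified]) auto
  also have "braid_eq n \<dots> []" using be_cancel[of j n b] Cons.prems a by simp
  finally show ?case using a by (simp add: inv_word_Cons)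
qed

lemma inv_l: "valid_word n w \<Longrightarrow> braid_eq n (inv_word w @ w) []"
  using inv_r[of n "inv_word w"] by simp

lemma be_lcancel: "valid_word n u \<Longrightarrow> braid_eq n (u@x) (u@y) \<Longrightarrow> braid_eq n x y"
proof -
  assume v: "valid_word n u" and e: "braid_eq n (u@x) (u@y)"
  have "braid_eq n x ((inv_word u @ u) @ x)" using be_post[OF inv_l[OF v], of x] be_sym by simp
  also have "braid_eq n \<dots> (inv_word u @ (u @ y))" using be_pre[OF e] by simp
  also have "braid_eq n \<dots> ((inv_word u @ u) @ y)" by (simp add: be_refl)
  also have "braid_eq n \<dots> y" using be_post[OF inv_l[OF v], of y] by simp
  finally show ?thesis .
qed

lemma be_solve: "valid_word n u \<Longrightarrow> braid_eq n (u@x) y \<longleftrightarrow> braid_eq n x (inv_word u @ y)"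
proof
  assume v: "valid_word n u" and e: "braid_eq n (u@x) y"
  have "braid_eq n (u @ x) (u @ (inv_word u @ y))"
    using e be_post[OF inv_r[OF v], of y] be_sym be_trans by (metis append.assoc append_Nil)
  then show "braid_eq n x (inv_word u @ y)" using be_lcancel v by blast
next
  assume v: "valid_word n u" and e: "braid_eq n x (inv_word u @ y)"
  have "braid_eq n (u@x) ((u @ inv_word u) @ y)" using be_pre[OF e] by simp
  also have "braid_eq n \<dots> y" using be_post[OF inv_r[OF v], of y] by simp
  finally show "braid_eq n (u@x) y" .
qed

subsection \<open>Exponent sum\<close>

definition es :: "bword \<Rightarrow> int" where "es w = sum_list (map (\<lambda>p. if snd p then 1 else -1) w)"

lemma es_append[simp]: "es (u@v) = es u + es v" by (simp add: es_def)
lemma es_Nil[simp]: "es [] = 0" by (simp add: es_def)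
lemma es_pw[simp]: "es (pw A) = int (length A)" by (induction A) (auto simp: es_def pw_def)
lemma es_inv[simp]: "es (inv_word w) = - es w"
  by (induction w) (auto simp: es_def inv_word_def)
lemma es_be: "braid_eq n x y \<Longrightarrow> es x = es y"
  by (induction rule: braid_eq.induct) (auto simp: es_def)

subsection \<open>Positivity and prefix order\<close>

lemma positive_iff: "positive n w \<longleftrightarrow> (\<exists>A. vl n A \<and> braid_eq n w (pw A))"
proof
  assume "positive n w"
  then obtain p where p: "valid_word n p" "\<forall>x\<in>set p. snd x" "braid_eq n w p" by (auto simp: positive_def)
  have "p = pw (map fst p)" using p(2) by (induction p) (auto simp: pw_def)
  then show "\<exists>A. vl n A \<and> braid_eq n w (pw A)" using p by (metis valid_pw)
next
  assume "\<exists>A. vl n A \<and> braid_eq n w (pw A)"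
  then show "positive n w" unfolding positive_def by (metis valid_pw pw_def imageE list.set_map snd_conv)
qed

lemma positive_pw: "vl n A \<Longrightarrow> positive n (pw A)" using positive_iff be_refl by blast
lemma positive_Nil: "positive n []" using positive_pw[of n "[]"] by simp
lemma positive_valid: "positive n w \<Longrightarrow> valid_word n w"
  using positive_iff be_valid' valid_pw by metis
lemma positive_be: "braid_eq n w w' \<Longrightarrow> positive n w \<Longrightarrow> positive n w'"
  unfolding positive_iff by (meson be_sym be_trans)
lemma positive_append: "positive n a \<Longrightarrow> positive n b \<Longrightarrow> positive n (a@b)"
  unfolding positive_iff by (metis be_cong pw_append vl_append)
lemma positive_es: "positive n w \<Longrightarrow> 0 \<le> es w"
  unfolding positive_iff using es_be by fastforce
lemma positive_es0: "positive n w \<Longrightarrow> es w = 0 \<Longrightarrow> braid_eq n w []"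
  unfolding positive_iff using es_be by fastforce

lemma prec_valid: "valid_word n a \<Longrightarrow> prec n a z \<Longrightarrow> valid_word n z"
  unfolding prec_def using positive_valid be_valid by fastforce
lemma prec_refl: "prec n a a" unfolding prec_def using positive_Nil be_refl by fastforce
lemma prec_trans: "prec n a b \<Longrightarrow> prec n b c \<Longrightarrow> prec n a c"
  unfolding prec_def by (metis append.assoc be_post be_trans positive_append)
lemma prec_be_l: "braid_eq n a a' \<Longrightarrow> prec n a z \<Longrightarrow> prec n a' z"
  unfolding prec_def by (meson be_post be_sym be_trans)
lemma prec_be_r: "braid_eq n z z' \<Longrightarrow> prec n a z \<Longrightarrow> prec n a z'"
  unfolding prec_def by (meson be_trans)
lemma prec_app: "positive n c \<Longrightarrow> prec n a (a @ c)" unfolding prec_def using be_refl by blast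
lemma prec_pre: "prec n a b \<Longrightarrow> prec n (u@a) (u@b)"
  unfolding prec_def by (metis append.assoc be_pre)
lemma prec_pre_iff: "valid_word n u \<Longrightarrow> prec n (u@a) (u@b) \<longleftrightarrow> prec n a b"
  unfolding prec_def by (metis append.assoc be_lcancel be_pre)
lemma prec_positive: "positive n a \<Longrightarrow> prec n a z \<Longrightarrow> positive n z"
  unfolding prec_def using positive_append positive_be by blast
lemma positive_prec: "positive n z \<Longrightarrow> prec n [] z"
  unfolding prec_def using be_refl by fastforce

lemma prec_shift: "valid_word n u \<Longrightarrow> prec n (u@a) z \<longleftrightarrow> prec n a (inv_word u @ z)"
  unfolding prec_def using be_solve by (metis append.assoc)

lemma prec_iff_pos: "valid_word n a \<Longrightarrow> prec n a z \<longleftrightarrow> positive n (inv_word a @ z)"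
  using prec_shift[of n a "[]" z] positive_prec
  by (metis append_Nil2 positive_Nil prec_def prec_positive be_sym)

lemma prec_antisym: "valid_word n a \<Longrightarrow> prec n a b \<Longrightarrow> prec n b a \<Longrightarrow> braid_eq n a b"
proof -
  assume v: "valid_word n a" and ab: "prec n a b" and ba: "prec n b a"
  obtain c where c: "positive n c" "braid_eq n (a@c) b" using ab by (auto simp: prec_def)
  obtain d where d: "positive n d" "braid_eq n (b@d) a" using ba by (auto simp: prec_def)
  have "es c + es d = 0" using es_be[OF c(2)] es_be[OF d(2)] by simp
  then have "es c = 0" using positive_es[OF c(1)] positive_es[OF d(1)] by linarith
  then have "braid_eq n c []" using positive_es0 c by blast
  then have "braid_eq n (a@c) a" using be_pre[of n c "[]" a] by simp
  then show ?thesis using c be_sym be_trans by blast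
qed

lemma prec_es: "prec n a b \<Longrightarrow> es a \<le> es b"
  unfolding prec_def using positive_es es_be by fastforce




definition LCMp :: "nat \<Rightarrow> bword \<Rightarrow> bword \<Rightarrow> bword \<Rightarrow> bool" where
  "LCMp n a b l = (prec n a l \<and> prec n b l \<and> (\<forall>z. prec n a z \<longrightarrow> prec n b z \<longrightarrow> prec n l z))"

lemma Lam_sym: "peq (i # cp i j) (j # cp j i)"
proof (cases "i = j")
  case True then show ?thesis by simp
next
  case False
  then consider "adj i j" | "far i j" using tri by blast
  then show ?thesis
  proof cases
    case 1 then show ?thesis by (simp add: cp_adj adj_sym br0)
  next
    case 2 then show ?thesis by (simp add: cp_far far_sym sw0)
  qed
qed

lemma set_cp: "set (cp i j) \<subseteq> {i, j}" by (auto simp: cp_def)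

lemma vl_cp: "1 \<le> i \<Longrightarrow> i < n \<Longrightarrow> 1 \<le> j \<Longrightarrow> j < n \<Longrightarrow> vl n (cp i j)"
  using set_cp[of i j] by (auto simp: vl_def)

lemma pos_pw_obtain: "positive n c \<Longrightarrow> (\<And>X. vl n X \<Longrightarrow> braid_eq n c (pw X) \<Longrightarrow> thesis) \<Longrightarrow> thesis"
  using positive_iff by blast

lemma atom:
  assumes n2: "2 \<le> n" and vi: "1 \<le> i" "i < n" and vj: "1 \<le> j" "j < n"
    and pi: "prec n (pw [i]) z" and pj: "prec n (pw [j]) z"
  shows "prec n (pw (i # cp i j)) z"
proof -
  obtain c where c: "positive n c" "braid_eq n (pw [i] @ c) z" using pi by (auto simp: prec_def)
  obtain d where d: "positive n d" "braid_eq n (pw [j] @ d) z" using pj by (auto simp: prec_def)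
  obtain X where X: "vl n X" "braid_eq n c (pw X)" using c(1) pos_pw_obtain by blast
  obtain Y where Y: "vl n Y" "braid_eq n d (pw Y)" using d(1) pos_pw_obtain by blast
  have ez: "braid_eq n z (pw (i#X))"
  proof -
    have "braid_eq n z (pw [i] @ c)" using c(2) by (rule be_sym)
    also have "braid_eq n \<dots> (pw [i] @ pw X)" using X(2) by (rule be_pre)
    finally show ?thesis by (simp add: pw_def)
  qed
  have "braid_eq n (pw (i#X)) (pw (j#Y))"
  proof -
    have "braid_eq n (pw (i#X)) z" using ez by (rule be_sym)
    also have "braid_eq n z (pw [j] @ d)" using d(2) by (rule be_sym)
    also have "braid_eq n \<dots> (pw [j] @ pw Y)" using Y(2) by (rule be_pre)
    finally show ?thesis by (simp add: pw_def)
  qed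
  moreover have "vl n (i#X)" using X vi by simp
  ultimately have "peq (i#X) (j#Y)" using embed[OF n2] by blast
  then obtain Z where Z: "peq X (cp i j @ Z)" using garside by blast
  have vZ: "vl n Z" using peq_set[OF Z] X(1) by (auto simp: vl_def)
  have "braid_eq n (pw X) (pw (cp i j @ Z))" using peq_be[OF Z X(1)] .
  then have "braid_eq n (pw (i#X)) (pw (i # cp i j) @ pw Z)" using be_pre[of n _ _ "pw [i]"]
    by (simp add: pw_def)
  then have "braid_eq n (pw (i # cp i j) @ pw Z) z" using ez be_sym be_trans by blast
  then show ?thesis unfolding prec_def using positive_pw[OF vZ] by blast
qed

lemma pw_single_valid: "1 \<le> i \<Longrightarrow> i < n \<Longrightarrow> valid_word n (pw [i])" by simp

lemma lcm_exists:
  assumes n2: "2 \<le> n"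
  shows "vl n A \<Longrightarrow> vl n B \<Longrightarrow> valid_word n m \<Longrightarrow> prec n (pw A) m \<Longrightarrow> prec n (pw B) m \<Longrightarrow>
         \<exists>L. vl n L \<and> LCMp n (pw A) (pw B) (pw L)"
proof (induction "nat (es m)" arbitrary: A B m rule: less_induct)
  case less
  note IH = less.hyps
  show ?case
  proof (cases A)
    case Nil
    have "LCMp n (pw A) (pw B) (pw B)" using Nil less.prems
      by (auto simp: LCMp_def prec_refl positive_prec positive_pw)
    then show ?thesis using less.prems by blast
  next
    case (Cons i A1)
    show ?thesis
    proof (cases B)
      case Nil
      have "LCMp n (pw A) (pw B) (pw A)" using Nil less.prems
        by (auto simp: LCMp_def prec_refl positive_prec positive_pw)
      then show ?thesis using less.prems by blast
    next
      case (Cons j B1)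
      note A = \<open>A = i # A1\<close> and B = this
      have vi: "1 \<le> i" "i < n" and vA1: "vl n A1" using less.prems A by auto
      have vj: "1 \<le> j" "j < n" and vB1: "vl n B1" using less.prems B by auto
      define si where "si = pw [i]"
      define sj where "sj = pw [j]"
      have vsi: "valid_word n si" and vsj: "valid_word n sj" using vi vj by (auto simp: si_def sj_def)
      have pA: "pw A = si @ pw A1" and pB: "pw B = sj @ pw B1" using A B by (auto simp: si_def sj_def pw_def)
      have esm: "1 \<le> es m" using prec_es[OF less.prems(4)] A by simp
      have vm: "valid_word n m" by (rule less.prems(3))
      define m1 where "m1 = inv_word si @ m"
      define m2 where "m2 = inv_word sj @ m"
      have es1: "es m1 = es m - 1" "es m2 = es m - 1" by (auto simp: m1_def m2_def si_def sj_def)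
      have vm1: "valid_word n m1" "valid_word n m2" using vm vsi vsj by (auto simp: m1_def m2_def)
      have pA1: "prec n (pw A1) m1" using less.prems(4) pA prec_shift[OF vsi] by (simp add: m1_def)
      have pB1: "prec n (pw B1) m2" using less.prems(5) pB prec_shift[OF vsj] by (simp add: m2_def)
      have lt1: "nat (es m1) < nat (es m)" "nat (es m2) < nat (es m)" using es1 esm by auto
      show ?thesis
      proof (cases "i = j")
        case True
        have pB1': "prec n (pw B1) m1" using pB1 True by (simp add: m1_def m2_def si_def sj_def)
        obtain L1 where L1: "vl n L1" "LCMp n (pw A1) (pw B1) (pw L1)"
          using IH[OF lt1(1) vA1 vB1 vm1(1) pA1 pB1'] by blast
        have "LCMp n (pw A) (pw B) (si @ pw L1)"
          unfolding LCMp_def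
        proof (intro conjI allI impI)
          show "prec n (pw A) (si @ pw L1)" using L1 pA by (simp add: LCMp_def prec_pre)
          show "prec n (pw B) (si @ pw L1)" using L1 pB True by (simp add: LCMp_def prec_pre si_def sj_def)
          fix z assume za: "prec n (pw A) z" and zb: "prec n (pw B) z"
          have "prec n (pw A1) (inv_word si @ z)" using za pA prec_shift[OF vsi] by simp
          moreover have "prec n (pw B1) (inv_word si @ z)" using zb pB True prec_shift[OF vsi]
            by (simp add: si_def sj_def)
          ultimately have "prec n (pw L1) (inv_word si @ z)" using L1 by (simp add: LCMp_def)
          then show "prec n (si @ pw L1) z" using prec_shift[OF vsi] by simp
        qed
        moreover have "si @ pw L1 = pw (i # L1)" by (simp add: si_def pw_def)
        ultimately show ?thesis using L1 vi by (metis vl_Cons)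
      next
        case False
        define Li where "Li = i # cp i j"
        define Lj where "Lj = j # cp j i"
        have vLi: "vl n Li" and vLj: "vl n Lj" using vl_cp vi vj by (auto simp: Li_def Lj_def)
        have eL: "braid_eq n (pw Li) (pw Lj)" using peq_be[OF _ vLi] Lam_sym by (simp add: Li_def Lj_def)
        have pLi: "pw Li = si @ pw (cp i j)" and pLj: "pw Lj = sj @ pw (cp j i)"
          by (auto simp: Li_def Lj_def si_def sj_def pw_def)
        have psi: "prec n si (pw A)" using pA prec_app positive_pw[OF vA1] by simp
        have psj: "prec n sj (pw B)" using pB prec_app positive_pw[OF vB1] by simp
        have atomz: "prec n (pw Li) z" if "prec n (pw A) z" "prec n (pw B) z" for z
          using atom[OF n2 vi vj] prec_trans[OF psi that(1)] prec_trans[OF psj that(2)]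
          by (simp add: Li_def si_def sj_def)
        have pLm: "prec n (pw Li) m" using atomz less.prems by blast
        have pLjm: "prec n (pw Lj) m" using prec_be_l[OF eL pLm] .
        have pc1: "prec n (pw (cp i j)) m1" using pLm pLi prec_shift[OF vsi] by (simp add: m1_def)
        have pc2: "prec n (pw (cp j i)) m2" using pLjm pLj prec_shift[OF vsj] by (simp add: m2_def)
        obtain L1 where L1: "vl n L1" "LCMp n (pw A1) (pw (cp i j)) (pw L1)"
          using IH[OF lt1(1) vA1 vl_cp[OF vi vj] vm1(1) pA1 pc1] by blast
        obtain L2 where L2: "vl n L2" "LCMp n (pw B1) (pw (cp j i)) (pw L2)"
          using IH[OF lt1(2) vB1 vl_cp[OF vj vi] vm1(2) pB1 pc2] by blast
        have "prec n (pw (cp i j)) (pw L1)" using L1 by (simp add: LCMp_def)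
        then obtain c1 where c1: "positive n c1" "braid_eq n (pw (cp i j) @ c1) (pw L1)"
          by (auto simp: prec_def)
        obtain U where U: "vl n U" "braid_eq n c1 (pw U)" using c1(1) pos_pw_obtain by blast
        have "prec n (pw (cp j i)) (pw L2)" using L2 by (simp add: LCMp_def)
        then obtain c2 where c2: "positive n c2" "braid_eq n (pw (cp j i) @ c2) (pw L2)"
          by (auto simp: prec_def)
        obtain V where V: "vl n V" "braid_eq n c2 (pw V)" using c2(1) pos_pw_obtain by blast
        have eU: "braid_eq n (pw Li @ pw U) (si @ pw L1)"
        proof -
          have "braid_eq n (pw (cp i j) @ pw U) (pw (cp i j) @ c1)" using U(2) be_pre be_sym by blast
          also have "braid_eq n \<dots> (pw L1)" using c1(2) .
          finally show ?thesis using pLi be_pre by fastforce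
        qed
        have eV: "braid_eq n (pw Li @ pw V) (sj @ pw L2)"
        proof -
          have "braid_eq n (pw Li @ pw V) (pw Lj @ pw V)" using eL by (rule be_post)
          also have "braid_eq n (pw (cp j i) @ pw V) (pw (cp j i) @ c2)" using V(2) be_pre be_sym by blast
          then have "braid_eq n (pw Lj @ pw V) (sj @ pw L2)" using c2(2) pLj be_pre be_trans
            by (metis append.assoc)
          finally show ?thesis .
        qed
        define m3 where "m3 = inv_word (pw Li) @ m"
        have vm3: "valid_word n m3" using vm vLi by (simp add: m3_def)
        have es3: "es m3 = es m - int (length Li)" by (simp add: m3_def)
        have lt3: "nat (es m3) < nat (es m)" using es3 esm by (simp add: Li_def)
        have L1m: "prec n (si @ pw L1) m"
        proof -
          have "prec n (pw L1) m1" using L1 pA1 pc1 by (simp add: LCMp_def)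
          then show ?thesis using prec_shift[OF vsi] by (simp add: m1_def)
        qed
        have L2m: "prec n (sj @ pw L2) m"
        proof -
          have "prec n (pw L2) m2" using L2 pB1 pc2 by (simp add: LCMp_def)
          then show ?thesis using prec_shift[OF vsj] by (simp add: m2_def)
        qed
        have pU: "prec n (pw U) m3"
          using prec_be_l[OF be_sym[OF eU] L1m] prec_shift[of n "pw Li"] vLi by (simp add: m3_def)
        have pV: "prec n (pw V) m3"
          using prec_be_l[OF be_sym[OF eV] L2m] prec_shift[of n "pw Li"] vLi by (simp add: m3_def)
        obtain W where W: "vl n W" "LCMp n (pw U) (pw V) (pw W)"
          using IH[OF lt3 U(1) V(1) vm3 pU pV] by blast
        have "LCMp n (pw A) (pw B) (pw Li @ pw W)"
          unfolding LCMp_def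
        proof (intro conjI allI impI)
          have UW: "prec n (pw Li @ pw U) (pw Li @ pw W)" using W by (simp add: LCMp_def prec_pre)
          have VW: "prec n (pw Li @ pw V) (pw Li @ pw W)" using W by (simp add: LCMp_def prec_pre)
          have "prec n (pw A) (si @ pw L1)" using L1 pA by (simp add: LCMp_def prec_pre)
          then have "prec n (pw A) (pw Li @ pw U)" using prec_be_r[OF be_sym[OF eU]] by blast
          then show "prec n (pw A) (pw Li @ pw W)" using UW prec_trans by blast
          have "prec n (pw B) (sj @ pw L2)" using L2 pB by (simp add: LCMp_def prec_pre)
          then have "prec n (pw B) (pw Li @ pw V)" using prec_be_r[OF be_sym[OF eV]] by blast
          then show "prec n (pw B) (pw Li @ pw W)" using VW prec_trans by blast
          fix z assume za: "prec n (pw A) z" and zb: "prec n (pw B) z"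
          have pLz: "prec n (pw Li) z" using atomz za zb by blast
          have pLjz: "prec n (pw Lj) z" using prec_be_l[OF eL pLz] .
          have "prec n (pw A1) (inv_word si @ z)" using za pA prec_shift[OF vsi] by simp
          moreover have "prec n (pw (cp i j)) (inv_word si @ z)" using pLz pLi prec_shift[OF vsi] by simp
          ultimately have "prec n (pw L1) (inv_word si @ z)" using L1 by (simp add: LCMp_def)
          then have "prec n (si @ pw L1) z" using prec_shift[OF vsi] by simp
          then have "prec n (pw Li @ pw U) z" using prec_be_l[OF be_sym[OF eU]] by blast
          then have zU: "prec n (pw U) (inv_word (pw Li) @ z)" using prec_shift vLi by simp
          have "prec n (pw B1) (inv_word sj @ z)" using zb pB prec_shift[OF vsj] by simp
          moreover have "prec n (pw (cp j i)) (inv_word sj @ z)" using pLjz pLj prec_shift[OF vsj] by simp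
          ultimately have "prec n (pw L2) (inv_word sj @ z)" using L2 by (simp add: LCMp_def)
          then have "prec n (sj @ pw L2) z" using prec_shift[OF vsj] by simp
          then have "prec n (pw Li @ pw V) z" using prec_be_l[OF be_sym[OF eV]] by blast
          then have zV: "prec n (pw V) (inv_word (pw Li) @ z)" using prec_shift vLi by simp
          have "prec n (pw W) (inv_word (pw Li) @ z)" using W zU zV by (simp add: LCMp_def)
          then show "prec n (pw Li @ pw W) z" using prec_shift vLi by simp
        qed
        then show ?thesis using vLi W(1) by (metis pw_append vl_append)
      qed
    qed
  qed
qed




abbreviation DD :: "nat \<Rightarrow> bword" where "DD n \<equiv> delta_word n"
abbreviation dp :: "nat \<Rightarrow> int \<Rightarrow> bword" where "dp n k \<equiv> delta_pow n k"

lemma delta_pw: "delta_word n = pw (dw n)"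
  by (simp add: delta_word_def pw_def dw_def map_concat Pm_def comp_def)

lemma vl_dw: "vl n (dw n)" by (auto simp: vl_def set_dw)
lemma valid_D[simp]: "valid_word n (DD n)" by (simp add: delta_pw vl_dw)

lemma concat_rep_Suc: "concat (replicate (Suc m) x) = concat (replicate m x) @ x"
  by (induction m) auto

lemma valid_concat_rep: "valid_word n x \<Longrightarrow> valid_word n (concat (replicate m x))"
  by (induction m) auto

lemma valid_dp[simp]: "valid_word n (dp n k)"
  by (simp add: delta_pow_def valid_concat_rep)

lemma concat_rep_comm: "concat (replicate m x) @ x = x @ concat (replicate m x)"
  by (induction m) auto

lemma dp_0[simp]: "dp n 0 = []" by (simp add: delta_pow_def)
lemma dp_1: "dp n 1 = DD n" by (simp add: delta_pow_def)
lemma dp_m1: "dp n (-1) = inv_word (DD n)" by (simp add: delta_pow_def)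

lemma dp_nat: "dp n (int l) = pw (dpow n l)"
  by (simp add: delta_pow_def dpow_def delta_pw pw_def map_concat)

lemma dp_neg_rep: "k \<le> 0 \<Longrightarrow> dp n k = concat (replicate (nat (-k)) (inv_word (DD n)))"
  by (auto simp: delta_pow_def)

lemma dp_succ: "braid_eq n (dp n (k+1)) (dp n k @ DD n)"
proof (cases "0 \<le> k")
  case True
  then have "nat (k+1) = Suc (nat k)" by simp
  then show ?thesis using True by (simp add: delta_pow_def concat_rep_comm be_refl)
next
  case False
  define m where "m = nat (-(k+1))"
  have 1: "dp n (k+1) = concat (replicate m (inv_word (DD n)))" using False dp_neg_rep[of "k+1" n] by (simp add: m_def)
  have "nat (-k) = Suc m" using False by (simp add: m_def)
  then have 2: "dp n k = concat (replicate m (inv_word (DD n))) @ inv_word (DD n)"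
    using False dp_neg_rep[of k n] by (simp add: concat_rep_comm)
  have "braid_eq n (dp n k @ DD n) (concat (replicate m (inv_word (DD n))) @ [])"
    unfolding 2 using be_pre[OF inv_l[OF valid_D]] by simp
  then show ?thesis using 1 be_sym by simp
qed

lemma dp_pred: "braid_eq n (dp n (k - 1)) (dp n k @ inv_word (DD n))"
proof (cases "k \<le> 0")
  case True
  then have "nat (-(k-1)) = Suc (nat (-k))" by simp
  then show ?thesis using True dp_neg_rep[of k n] dp_neg_rep[of "k-1" n] by (simp add: concat_rep_comm be_refl)
next
  case False
  define m where "m = nat (k - 1)"
  have 1: "dp n (k - 1) = concat (replicate m (DD n))" using False by (simp add: m_def delta_pow_def)
  have "nat k = Suc m" using False by (simp add: m_def)
  then have 2: "dp n k = concat (replicate m (DD n)) @ DD n"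
    using False by (simp add: concat_rep_comm delta_pow_def)
  have "braid_eq n (dp n k @ inv_word (DD n)) (concat (replicate m (DD n)) @ [])"
    unfolding 2 using be_pre[OF inv_r[OF valid_D]] by simp
  then show ?thesis using 1 be_sym by simp
qed

lemma dp_add: "braid_eq n (dp n (a+b)) (dp n a @ dp n b)"
proof (induction b rule: int_induct[where k=0])
  case base then show ?case by (simp add: be_refl)
next
  case (step1 b)
  have "braid_eq n (dp n (a+(b+1))) (dp n (a+b) @ DD n)" using dp_succ[of n "a+b"] by (simp add: add.assoc)
  also have "braid_eq n \<dots> ((dp n a @ dp n b) @ DD n)" by (rule be_post[OF step1(2)])
  also have "braid_eq n \<dots> (dp n a @ dp n (b+1))" using be_pre[OF be_sym[OF dp_succ[of n b]]] by simp
  finally show ?case .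
next
  case (step2 b)
  have "braid_eq n (dp n (a+(b-1))) (dp n (a+b) @ inv_word (DD n))" using dp_pred[of n "a+b"] by (simp add: algebra_simps)
  also have "braid_eq n \<dots> ((dp n a @ dp n b) @ inv_word (DD n))" by (rule be_post[OF step2(2)])
  also have "braid_eq n \<dots> (dp n a @ dp n (b-1))" using be_pre[OF be_sym[OF dp_pred[of n b]]] by simp
  finally show ?case .
qed

lemma dp_comm: "braid_eq n (dp n a @ dp n b) (dp n b @ dp n a)"
  using dp_add[of n a b] dp_add[of n b a] by (metis add.commute be_sym be_trans)

lemma dp_cancel: "braid_eq n (dp n k @ dp n (-k)) []"
  using dp_add[of n k "-k"] be_sym by simp

lemma dp_cancel': "braid_eq n (dp n (-k) @ dp n k) []"
  using dp_cancel[of n "-k"] by simp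

lemma dp_inv: "braid_eq n (inv_word (dp n k)) (dp n (-k))"
proof -
  have "braid_eq n (dp n k @ dp n (-k)) ([] @ [])" using dp_cancel by simp
  then have "braid_eq n (dp n (-k)) (inv_word (dp n k) @ [])" using be_solve[of n "dp n k"] by simp
  then show ?thesis using be_sym by simp
qed

lemma es_dp: "es (dp n k) = k * es (DD n)"
proof (induction k rule: int_induct[where k=0])
  case base then show ?case by simp
next
  case (step1 i) then show ?case using es_be[OF dp_succ[of n i]] by (simp add: algebra_simps)
next
  case (step2 i) then show ?case using es_be[OF dp_pred[of n i]] by (simp add: algebra_simps)
qed

lemma es_D: "2 \<le> n \<Longrightarrow> 1 \<le> es (DD n)"
proof -
  assume "2 \<le> n"
  then have "1 \<in> set (dw n)" by (simp add: set_dw)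
  then have "dw n \<noteq> []" by auto
  then show ?thesis by (simp add: delta_pw Suc_le_eq)
qed

lemma dp_nonneg_pos: "0 \<le> k \<Longrightarrow> positive n (dp n k)"
proof -
  assume "0 \<le> k"
  then obtain l where "k = int l" by (metis nonneg_eq_int)
  then show ?thesis using dp_nat[of n l] positive_pw[of n "dpow n l"] vl_dw
    by (auto simp: dpow_def vl_def)
qed

lemma positive_D: "positive n (DD n)" using dp_nonneg_pos[of 1 n] by (simp add: dp_1)

subsection \<open>Conjugation by powers of Delta\<close>

lemma conj_nat: "2 \<le> n \<Longrightarrow> vl n X \<Longrightarrow> braid_eq n (pw X @ dp n (int l)) (dp n (int l) @ pw (tpx n l X))"
proof -
  assume n2: "2 \<le> n" and v: "vl n X"
  have vd: "vl n (dpow n l)" by (induction l) (auto simp: dpow_Suc vl_dw)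
  have "braid_eq n (pw (X @ dpow n l)) (pw (dpow n l @ tpx n l X))"
    using peq_be[OF L4[OF n2 v, of l]] v vd by simp
  then show ?thesis by (simp add: dp_nat)
qed

lemma tau_pos_pw: "2 \<le> n \<Longrightarrow> vl n X \<Longrightarrow> positive n (tau_pow n k (pw X))"
proof -
  assume n2: "2 \<le> n" and v: "vl n X"
  obtain l where "k = int l \<or> k = - int l" by (metis int_cases2)
  then show ?thesis
  proof
    assume k: "k = int l"
    have "braid_eq n (tau_pow n k (pw X)) (dp n (- int l) @ dp n (int l) @ pw (tpx n l X))"
      unfolding tau_pow_def k using be_pre[OF conj_nat[OF n2 v, of l]] by simp
    also have "braid_eq n \<dots> ([] @ pw (tpx n l X))"
      using be_post[OF dp_cancel'[of n "int l"]] by simp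
    finally show ?thesis using positive_be be_sym positive_pw tpx_vl[OF v] by (metis append_Nil)
  next
    assume k: "k = - int l"
    have v': "vl n (tpx n l X)" using tpx_vl[OF v] .
    have tt: "tpx n l (tpx n l X) = X" using tpx_tpx[OF v, of l l] by (simp add: tpx_def)
    have c: "braid_eq n (pw (tpx n l X) @ dp n (int l)) (dp n (int l) @ pw X)"
      using conj_nat[OF n2 v', of l] tt by simp
    have "tau_pow n k (pw X) = (dp n (int l) @ pw X) @ dp n (- int l)" by (simp add: tau_pow_def k)
    also have "braid_eq n \<dots> ((pw (tpx n l X) @ dp n (int l)) @ dp n (- int l))"
      using be_post[OF be_sym[OF c]] .
    also have "braid_eq n \<dots> (pw (tpx n l X) @ [])"
      using be_pre[OF dp_cancel[of n "int l"]] by simp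
    finally show ?thesis using positive_be be_sym positive_pw v' by (metis append_Nil2)
  qed
qed

lemma tau_be: "braid_eq n x y \<Longrightarrow> braid_eq n (tau_pow n k x) (tau_pow n k y)"
  unfolding tau_pow_def by (rule be_app)

lemma tau_pos: "2 \<le> n \<Longrightarrow> positive n x \<Longrightarrow> positive n (tau_pow n k x)"
  using positive_iff tau_pos_pw tau_be positive_be be_sym by metis

lemma tau_app: "braid_eq n (tau_pow n k (x @ y)) (tau_pow n k x @ tau_pow n k y)"
proof -
  have "braid_eq n (dp n (-k) @ x @ [] @ y @ dp n k) (dp n (-k) @ x @ (dp n k @ dp n (-k)) @ y @ dp n k)"
    using be_app[OF be_sym[OF dp_cancel[of n k]], of "dp n (-k) @ x" "y @ dp n k"] by simp
  then show ?thesis by (simp add: tau_pow_def)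
qed

lemma valid_tau[simp]: "valid_word n (tau_pow n k x) = valid_word n x" by (simp add: tau_pow_def)

lemma tau_prec: "2 \<le> n \<Longrightarrow> prec n a b \<Longrightarrow> prec n (tau_pow n k a) (tau_pow n k b)"
proof -
  assume n2: "2 \<le> n" and "prec n a b"
  then obtain c where c: "positive n c" "braid_eq n (a @ c) b" by (auto simp: prec_def)
  have "braid_eq n (tau_pow n k a @ tau_pow n k c) (tau_pow n k b)"
    using tau_app[of n k a c] tau_be[OF c(2)] be_sym be_trans by blast
  then show ?thesis unfolding prec_def using tau_pos[OF n2 c(1)] by blast
qed

lemma tau_D: "braid_eq n (tau_pow n k (DD n)) (DD n)"
proof -
  have "braid_eq n (dp n (-k) @ dp n 1 @ dp n k) (dp n (-k) @ dp n k @ dp n 1)"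
    using be_pre[OF dp_comm[of n 1 k]] .
  also have "braid_eq n \<dots> ([] @ dp n 1)" using be_post[OF dp_cancel'[of n k]] by simp
  finally show ?thesis by (simp add: tau_pow_def dp_1)
qed

lemma inv_tau: "braid_eq n (inv_word (tau_pow n k x)) (dp n (-k) @ inv_word x @ dp n k)"
proof -
  have "inv_word (tau_pow n k x) = inv_word (dp n k) @ inv_word x @ inv_word (dp n (-k))"
    by (simp add: tau_pow_def)
  also have "braid_eq n \<dots> (dp n (-k) @ inv_word x @ dp n k)"
    using be_cong[OF dp_inv[of n k] be_pre[OF dp_inv[of n "-k"], of "inv_word x"]] by simp
  finally show ?thesis .
qed

subsection \<open>inf\<close>

definition Sinf :: "nat \<Rightarrow> bword \<Rightarrow> int \<Rightarrow> bool" where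
  "Sinf n d k = (\<exists>p. positive n p \<and> braid_eq n d (dp n k @ p))"

lemma binf_Sinf: "binf n d = (GREATEST k. Sinf n d k)" by (simp add: binf_def Sinf_def)

lemma int_greatest:
  fixes P :: "int \<Rightarrow> bool"
  assumes "P k0" and "\<And>k. P k \<Longrightarrow> k \<le> B"
  shows "P (GREATEST k. P k) \<and> (\<forall>k. P k \<longrightarrow> k \<le> (GREATEST k. P k))"
proof -
  define S where "S = {k. k0 \<le> k \<and> k \<le> B \<and> P k}"
  have fin: "finite S" by (rule finite_subset[of _ "{k0..B}"]) (auto simp: S_def)
  have ne: "k0 \<in> S" using assms by (auto simp: S_def)
  define M where "M = Max S"
  have PM: "P M" using Max_in[OF fin] ne by (auto simp: M_def S_def)
  have le: "P k \<Longrightarrow> k \<le> M" for k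
  proof (cases "k0 \<le> k")
    case True
    assume "P k"
    then have "k \<in> S" using True assms by (auto simp: S_def)
    then show ?thesis using Max_ge[OF fin] by (simp add: M_def)
  next
    case False
    then show ?thesis using Max_ge[OF fin ne] by (simp add: M_def)
  qed
  have "(GREATEST k. P k) = M" using PM le by (intro Greatest_equality) auto
  then show ?thesis using PM le by auto
qed

lemma Sinf_bound: "2 \<le> n \<Longrightarrow> Sinf n d k \<Longrightarrow> k \<le> \<bar>es d\<bar>"
proof -
  assume n2: "2 \<le> n" and "Sinf n d k"
  then obtain p where p: "positive n p" "braid_eq n d (dp n k @ p)" by (auto simp: Sinf_def)
  have "es d = k * es (DD n) + es p" using es_be[OF p(2)] es_dp by simp
  moreover have "0 \<le> es p" using positive_es[OF p(1)] .
  moreover have "1 \<le> es (DD n)" using es_D[OF n2] .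
  ultimately show ?thesis
  proof (cases "0 \<le> k")
    case True
    assume "es d = k * es (DD n) + es p" "0 \<le> es p" "1 \<le> es (DD n)"
    then have "k * 1 \<le> k * es (DD n)" using True by (intro mult_left_mono) auto
    then have "k \<le> k * es (DD n)" by simp
    then show ?thesis using \<open>es d = _\<close> \<open>0 \<le> es p\<close> by linarith
  next
    case False then show ?thesis by linarith
  qed
qed

lemma conj_negpow: "2 \<le> n \<Longrightarrow> vl n P \<Longrightarrow> braid_eq n (pw P @ dp n (- int l)) (dp n (- int l) @ pw (tpx n l P))"
proof -
  assume n2: "2 \<le> n" and v: "vl n P"
  have v': "vl n (tpx n l P)" using tpx_vl[OF v] .
  have tt: "tpx n l (tpx n l P) = P" using tpx_tpx[OF v, of l l] by (simp add: tpx_def)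
  have c: "braid_eq n (pw (tpx n l P) @ dp n (int l)) (dp n (int l) @ pw P)"
    using conj_nat[OF n2 v', of l] tt by simp
  have "braid_eq n (pw P @ dp n (- int l)) ((dp n (- int l) @ dp n (int l)) @ pw P @ dp n (- int l))"
    using be_post[OF be_sym[OF dp_cancel'[of n "int l"]], of "pw P @ dp n (- int l)"] by simp
  also have "braid_eq n \<dots> (dp n (- int l) @ (pw (tpx n l P) @ dp n (int l)) @ dp n (- int l))"
    using be_app[OF be_sym[OF c], of "dp n (- int l)" "dp n (- int l)"] by simp
  also have "braid_eq n \<dots> (dp n (- int l) @ pw (tpx n l P) @ [])"
    using be_app[OF dp_cancel[of n "int l"], of "dp n (- int l) @ pw (tpx n l P)" "[]"] by simp
  finally show ?thesis by simp
qed

lemma Sinf_ne: "2 \<le> n \<Longrightarrow> valid_word n d \<Longrightarrow> \<exists>l Q. vl n Q \<and> braid_eq n d (dp n (- int l) @ pw Q)"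
proof (induction d)
  case Nil then show ?case by (intro exI[of _ 0] exI[of _ "[]"]) (simp add: be_refl)
next
  case (Cons a w)
  obtain j b where a: "a = (j,b)" by (cases a)
  have vj: "1 \<le> j" "j < n" using Cons.prems a by auto
  obtain l Q where Q: "vl n Q" "braid_eq n w (dp n (- int l) @ pw Q)" using Cons by auto
  show ?case
  proof (cases b)
    case True
    have "braid_eq n (a # w) (pw [j] @ dp n (- int l) @ pw Q)"
      using be_pre[OF Q(2), of "[a]"] a True by (simp add: pw_def)
    also have "braid_eq n \<dots> (dp n (- int l) @ pw (tpx n l [j]) @ pw Q)"
      using be_post[OF conj_negpow[OF Cons.prems(1), of "[j]" l]] vj by simp
    finally show ?thesis using Q(1) tpx_vl[of n "[j]" l] vj
      by (metis pw_append vl_append vl_Cons vl_Nil)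
  next
    case False
    have vc: "vl n (cj n j)" using set_cj[of n j] vj Cons.prems by (auto simp: vl_def)
    have eD: "braid_eq n (DD n) (pw (cj n j) @ pw [j])"
      using peq_be[OF cj[OF Cons.prems(1) vj] vl_dw] by (simp add: delta_pw)
    have ea: "braid_eq n [a] (inv_word (DD n) @ pw (cj n j))"
    proof -
      have "braid_eq n (DD n @ [a]) ((pw (cj n j) @ pw [j]) @ [(j, False)])" using be_post[OF eD] a False by simp
      also have "braid_eq n \<dots> (pw (cj n j) @ [])"
        using be_pre[OF be_cancel[OF vj, of True]] by (simp add: pw_def)
      finally show ?thesis using be_solve[of n "DD n" "[a]"] by simp
    qed
    have "braid_eq n (a # w) ((inv_word (DD n) @ pw (cj n j)) @ dp n (- int l) @ pw Q)"
      using be_cong[OF ea Q(2)] by simp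
    also have "braid_eq n \<dots> (inv_word (DD n) @ (dp n (- int l) @ pw (tpx n l (cj n j))) @ pw Q)"
      using be_app[OF conj_negpow[OF Cons.prems(1) vc, of l], of "inv_word (DD n)" "pw Q"] by simp
    also have "\<dots> = (dp n (-1) @ dp n (- int l)) @ pw (tpx n l (cj n j) @ Q)" by (simp add: dp_m1)
    also have "braid_eq n \<dots> (dp n (- int (Suc l)) @ pw (tpx n l (cj n j) @ Q))"
      using be_post[OF be_sym[OF dp_add[of n "-1" "- int l"]]] by simp
    finally show ?thesis using Q(1) tpx_vl[OF vc, of l] by (metis vl_append)
  qed
qed

lemma Sinf_down: "Sinf n d k \<Longrightarrow> J \<le> k \<Longrightarrow> Sinf n d J"
proof -
  assume "Sinf n d k" "J \<le> k"
  then obtain p where p: "positive n p" "braid_eq n d (dp n k @ p)" by (auto simp: Sinf_def)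
  have "braid_eq n (dp n k @ p) ((dp n J @ dp n (k - J)) @ p)" using be_post[OF dp_add[of n J "k-J"]] by simp
  then have "braid_eq n d (dp n J @ (dp n (k - J) @ p))" using p(2) be_trans by simp
  moreover have "positive n (dp n (k - J) @ p)" using dp_nonneg_pos[of "k-J" n] \<open>J \<le> k\<close> p(1) positive_append by simp
  ultimately show ?thesis by (auto simp: Sinf_def)
qed

lemma binf_char: "2 \<le> n \<Longrightarrow> valid_word n d \<Longrightarrow> (J \<le> binf n d \<longleftrightarrow> Sinf n d J)"
proof -
  assume n2: "2 \<le> n" and v: "valid_word n d"
  obtain l Q where Q: "vl n Q" "braid_eq n d (dp n (- int l) @ pw Q)" using Sinf_ne[OF n2 v] by blast
  have "Sinf n d (- int l)" using Q positive_pw by (auto simp: Sinf_def)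
  then have G: "Sinf n d (binf n d) \<and> (\<forall>k. Sinf n d k \<longrightarrow> k \<le> binf n d)"
    unfolding binf_Sinf using int_greatest[of "Sinf n d" _ "\<bar>es d\<bar>"] Sinf_bound[OF n2] by blast
  show ?thesis using G Sinf_down by blast
qed




lemma conj_nth: "t < length \<delta> \<Longrightarrow> conj_tuple \<delta> s ! t = inv_word s @ (\<delta> ! t) @ s"
  by (simp add: conj_tuple_def)

lemma G1: "braid_eq n (dp n j @ inv_word (tau_pow n j s) @ y) (inv_word s @ dp n j @ y)"
proof -
  have "braid_eq n (dp n j @ inv_word (tau_pow n j s) @ y) (dp n j @ (dp n (-j) @ inv_word s @ dp n j) @ y)"
    using be_app[OF inv_tau[of n j s], of "dp n j" y] .
  also have "\<dots> = (dp n j @ dp n (-j)) @ inv_word s @ dp n j @ y" by simp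
  also have "braid_eq n \<dots> ([] @ inv_word s @ dp n j @ y)" using be_post[OF dp_cancel[of n j]] .
  finally show ?thesis by simp
qed

locale alg =
  fixes n i :: nat and J :: "int list" and \<delta> :: "bword list" and p :: "nat \<Rightarrow> bword"
  assumes i1: "1 \<le> i" and i2: "i < n"
    and C: "in_C n J \<delta>"
    and P: "\<forall>t\<in>alg_D n J \<delta>. valid_word n (p t) \<and> positive n (p t) \<and>
                          braid_eq n (\<delta> ! t) (delta_pow n (J ! t) @ p t)"
begin

lemma n2: "2 \<le> n" using i1 i2 by simp

abbreviation R where "R \<equiv> r_set n J \<delta> i"
abbreviation stp where "stp \<equiv> alg_step n J \<delta> p"
abbreviation sig where "sig \<equiv> [(i, True)]"

lemma sig_pw: "sig = pw [i]" by (simp add: pw_def)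
lemma valid_sig: "valid_word n sig" using i1 i2 by simp

lemma lenJ: "length \<delta> = length J" using C by (simp add: in_C_def)
lemma vd: "t < length J \<Longrightarrow> valid_word n (\<delta> ! t)" using C by (simp add: in_C_def)
lemma bd: "t < length J \<Longrightarrow> J ! t \<le> binf n (\<delta> ! t)" using C by (simp add: in_C_def)
lemma pD: "t \<in> alg_D n J \<delta> \<Longrightarrow> valid_word n (p t) \<and> positive n (p t) \<and> braid_eq n (\<delta> ! t) (dp n (J ! t) @ p t)"
  using P by blast
lemma D_lt: "t \<in> alg_D n J \<delta> \<Longrightarrow> t < length J" by (simp add: alg_D_def)

lemma R_valid: "x \<in> R \<Longrightarrow> valid_word n x" by (simp add: r_set_def)
lemma R_pos: "x \<in> R \<Longrightarrow> positive n x" by (simp add: r_set_def simple_def)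

lemma U1:
  assumes x: "x \<in> R" and m: "m \<in> alg_D n J \<delta>"
  shows "prec n (tau_pow n (J!m) x) (p m @ x)"
proof -
  define j where "j = J ! m"
  have ml: "m < length J" using D_lt[OF m] .
  have vx: "valid_word n x" using R_valid[OF x] .
  have inC: "in_C n J (conj_tuple \<delta> x)" using x by (simp add: r_set_def)
  have "J ! m \<le> binf n (conj_tuple \<delta> x ! m)" using inC ml by (simp add: in_C_def)
  then have "J ! m \<le> binf n (inv_word x @ (\<delta> ! m) @ x)" using conj_nth[of m \<delta> x] ml lenJ by simp
  then have "Sinf n (inv_word x @ (\<delta> ! m) @ x) j" using binf_char[OF n2] vd[OF ml] vx j_def by simp
  then obtain q where q: "positive n q" "braid_eq n (inv_word x @ (\<delta> ! m) @ x) (dp n j @ q)"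
    by (auto simp: Sinf_def)
  have pm: "braid_eq n (\<delta> ! m) (dp n j @ p m)" using pD[OF m] j_def by simp
  have "braid_eq n (inv_word (tau_pow n j x) @ p m @ x) ((dp n (-j) @ inv_word x @ dp n j) @ p m @ x)"
    using be_post[OF inv_tau[of n j x]] .
  also have "\<dots> = dp n (-j) @ inv_word x @ (dp n j @ p m) @ x" by simp
  also have "braid_eq n \<dots> (dp n (-j) @ inv_word x @ (\<delta> ! m) @ x)"
    using be_app[OF be_sym[OF pm], of "dp n (-j) @ inv_word x" x] by simp
  also have "braid_eq n \<dots> (dp n (-j) @ dp n j @ q)" using be_pre[OF q(2)] .
  also have "braid_eq n \<dots> ([] @ q)" using be_post[OF dp_cancel'[of n j]] by simp
  finally have "positive n (inv_word (tau_pow n j x) @ p m @ x)" using q(1) positive_be be_sym by fastforce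
  then show ?thesis using prec_iff_pos[of n "tau_pow n j x"] vx j_def by simp
qed

lemma D_in_R: "DD n \<in> R"
proof -
  obtain c where c: "peq (dw n) (i # c)" using dw_left[OF n2 i1 i2] by blast
  have vc: "vl n c" using peq_set[OF c] by (auto simp: vl_def set_dw)
  have "braid_eq n (DD n) (pw [i] @ pw c)" using peq_be[OF c vl_dw] by (simp add: delta_pw pw_def)
  then have ps: "prec n sig (DD n)" unfolding prec_def sig_pw using positive_pw[OF vc] be_sym by blast
  have inC: "in_C n J (conj_tuple \<delta> (DD n))"
    unfolding in_C_def
  proof (intro conjI allI impI)
    show "length (conj_tuple \<delta> (DD n)) = length J" using lenJ by (simp add: conj_tuple_def)
    fix t assume t: "t < length J"
    have e: "conj_tuple \<delta> (DD n) ! t = inv_word (DD n) @ (\<delta> ! t) @ DD n" using conj_nth[of t \<delta>] t lenJ by simp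
    show "valid_word n (conj_tuple \<delta> (DD n) ! t)" using e vd[OF t] by simp
    define j where "j = J ! t"
    have "Sinf n (\<delta> ! t) j" using binf_char[OF n2 vd[OF t]] bd[OF t] j_def by simp
    then obtain q where q: "positive n q" "braid_eq n (\<delta> ! t) (dp n j @ q)" by (auto simp: Sinf_def)
    have "braid_eq n (inv_word (DD n) @ (\<delta> ! t) @ DD n) (dp n (-1) @ (dp n j @ q) @ DD n)"
      using be_app[OF q(2)] dp_m1 by simp
    also have "\<dots> = (dp n (-1) @ dp n j) @ q @ DD n" by simp
    also have "braid_eq n \<dots> ((dp n j @ dp n (-1)) @ q @ DD n)" using be_post[OF dp_comm] .
    also have "\<dots> = dp n j @ tau_pow n 1 q" by (simp add: tau_pow_def dp_1)
    finally have "Sinf n (conj_tuple \<delta> (DD n) ! t) j"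
      using e tau_pos[OF n2 q(1)] by (auto simp: Sinf_def)
    then show "J ! t \<le> binf n (conj_tuple \<delta> (DD n) ! t)" using binf_char[OF n2] e vd[OF t] j_def by simp
  qed
  show ?thesis using ps inC positive_D prec_refl by (simp add: r_set_def simple_def)
qed

definition Inv where "Inv s = (valid_word n s \<and> positive n s \<and> prec n sig s \<and> (\<forall>x\<in>R. prec n s x))"

lemma Inv_sig: "Inv sig"
  using valid_sig positive_pw[of n "[i]"] i1 i2 prec_refl by (auto simp: Inv_def sig_pw r_set_def)

lemma Inv_step: assumes I: "Inv s" and st: "stp s s2" shows "Inv s2"
proof -
  obtain m s' where m: "m \<in> alg_D n J \<delta>" and s': "valid_word n s'" "positive n s'"
    and l: "is_lcm n (tau_pow n (J ! m) s) (p m @ s) (p m @ s @ s')" and s2: "s2 = s @ s'"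
    using st by (auto simp: alg_step_def)
  have vs: "valid_word n s" "positive n s" using I by (auto simp: Inv_def)
  have pm: "valid_word n (p m)" "positive n (p m)" using pD[OF m] by auto
  have "prec n s x \<Longrightarrow> x \<in> R \<Longrightarrow> prec n s2 x" for x
  proof -
    assume sx: "prec n s x" and x: "x \<in> R"
    have a: "prec n (tau_pow n (J!m) s) (p m @ x)"
      using prec_trans[OF tau_prec[OF n2 sx] U1[OF x m]] .
    have b: "prec n (p m @ s) (p m @ x)" using prec_pre[OF sx] .
    have "positive n (p m @ x)" using positive_append pm R_pos[OF x] by blast
    then have "prec n (p m @ s @ s') (p m @ x)" using l a b by (simp add: is_lcm_def)
    then show ?thesis using prec_pre_iff[OF pm(1), of "s @ s'" x] s2 by simp
  qed
  moreover have "prec n sig s2" using I s2 prec_trans prec_app[OF s'(2)] by (metis Inv_def)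
  ultimately show ?thesis using I s' s2 positive_append by (auto simp: Inv_def)
qed

lemma Inv_reach: "stp\<^sup>*\<^sup>* sig s \<Longrightarrow> Inv s"
  by (induction rule: rtranclp_induct) (auto intro: Inv_sig Inv_step)

lemma step_es: assumes I: "Inv s" and st: "stp s s2" shows "es s + 1 \<le> es s2"
proof -
  obtain m s' where m: "m \<in> alg_D n J \<delta>" and np: "\<not> prec n (tau_pow n (J ! m) s) (p m @ s)"
    and s': "valid_word n s'" "positive n s'"
    and l: "is_lcm n (tau_pow n (J ! m) s) (p m @ s) (p m @ s @ s')" and s2: "s2 = s @ s'"
    using st by (auto simp: alg_step_def)
  have "es s' \<noteq> 0"
  proof
    assume "es s' = 0"
    then have "braid_eq n s' []" using positive_es0 s' by blast
    then have "braid_eq n (p m @ s @ s') (p m @ s)" using be_pre[of n s' "[]" "p m @ s"] by simp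
    moreover have "prec n (tau_pow n (J ! m) s) (p m @ s @ s')" using l by (simp add: is_lcm_def)
    ultimately show False using np prec_be_r by blast
  qed
  then show ?thesis using positive_es[OF s'(2)] s2 by simp
qed

lemma Inv_le_D: "Inv s \<Longrightarrow> es s \<le> es (DD n)"
  using D_in_R prec_es by (auto simp: Inv_def)

lemma part1: "\<nexists>f. f 0 = sig \<and> (\<forall>k. stp (f k) (f (Suc k)))"
proof
  assume "\<exists>f. f 0 = sig \<and> (\<forall>k. stp (f k) (f (Suc k)))"
  then obtain f where f0: "f 0 = sig" and fs: "\<forall>k. stp (f k) (f (Suc k))" by blast
  have r: "stp\<^sup>*\<^sup>* sig (f k)" for k
  proof (induction k)
    case 0 then show ?case by (simp add: f0)
  next
    case (Suc k) then show ?case using fs by (meson rtranclp.rtrancl_into_rtrancl)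
  qed
  have e: "int k + 1 \<le> es (f k)" for k
  proof (induction k)
    case 0 then show ?case by (simp add: f0 es_def)
  next
    case (Suc k) then show ?case using step_es[OF Inv_reach[OF r] fs[rule_format, of k]] by simp
  qed
  have "int (nat (es (DD n))) + 1 \<le> es (DD n)"
    using e[of "nat (es (DD n))"] Inv_le_D[OF Inv_reach[OF r]] by (meson order_trans)
  moreover have "0 \<le> es (DD n)" using es_D[OF n2] by simp
  ultimately show False by simp
qed

lemma part2: assumes r: "stp\<^sup>*\<^sup>* sig s" and ns: "\<not> alg_stop n J \<delta> p s" shows "\<exists>s2. stp s s2"
proof -
  have I: "Inv s" using Inv_reach[OF r] .
  have vs: "valid_word n s" "positive n s" and sD: "prec n s (DD n)" using I D_in_R by (auto simp: Inv_def)
  obtain m where m: "m \<in> alg_D n J \<delta>" and np: "\<not> prec n (tau_pow n (J ! m) s) (p m @ s)"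
    using ns by (auto simp: alg_stop_def)
  define j where "j = J ! m"
  define a where "a = tau_pow n j s"
  define b where "b = p m @ s"
  have pm: "valid_word n (p m)" "positive n (p m)" using pD[OF m] by auto
  have pa: "positive n a" using tau_pos[OF n2 vs(2)] a_def by simp
  have pb: "positive n b" using positive_append pm vs b_def by simp
  obtain A where A: "vl n A" "braid_eq n a (pw A)" using pa pos_pw_obtain by blast
  obtain B where B: "vl n B" "braid_eq n b (pw B)" using pb pos_pw_obtain by blast
  define m0 where "m0 = p m @ DD n"
  have vm0: "valid_word n m0" using pm by (simp add: m0_def)
  have am0: "prec n a m0"
    using prec_trans[OF tau_prec[OF n2 sD] U1[OF D_in_R m]] a_def j_def m0_def by simp
  have bm0: "prec n b m0" using prec_pre[OF sD] b_def m0_def by simp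
  obtain L where L: "vl n L" "LCMp n (pw A) (pw B) (pw L)"
    using lcm_exists[OF n2 A(1) B(1) vm0 prec_be_l[OF A(2) am0] prec_be_l[OF B(2) bm0]] by blast
  have "prec n (pw B) (pw L)" using L by (simp add: LCMp_def)
  then obtain c where c: "positive n c" "braid_eq n (pw B @ c) (pw L)" by (auto simp: prec_def)
  obtain Cw where Cw: "vl n Cw" "braid_eq n c (pw Cw)" using c(1) pos_pw_obtain by blast
  define s' where "s' = pw Cw"
  have eL: "braid_eq n (b @ s') (pw L)"
  proof -
    have "braid_eq n (b @ s') (pw B @ c)" using be_cong[OF B(2) be_sym[OF Cw(2)]] s'_def by simp
    then show ?thesis using c(2) be_trans by blast
  qed
  have ps': "positive n s'" using positive_pw[OF Cw(1)] s'_def by simp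
  have "is_lcm n a b (b @ s')"
    unfolding is_lcm_def
  proof (intro conjI allI impI)
    show "positive n (b @ s')" using positive_append pb ps' by blast
    have "prec n (pw A) (pw L)" using L by (simp add: LCMp_def)
    then have "prec n a (pw L)" using prec_be_l[OF be_sym[OF A(2)]] by blast
    then show "prec n a (b @ s')" using prec_be_r[OF be_sym[OF eL]] by blast
    show "prec n b (b @ s')" using prec_app[OF ps'] .
    fix z assume "positive n z" "prec n a z" "prec n b z"
    then have "prec n (pw A) z" "prec n (pw B) z" using prec_be_l A(2) B(2) by blast+
    then have "prec n (pw L) z" using L by (simp add: LCMp_def)
    then show "prec n (b @ s') z" using prec_be_l[OF be_sym[OF eL]] by blast
  qed
  then have "stp s (s @ s')" unfolding alg_step_def using m np Cw(1) ps' s'_def a_def b_def j_def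
    by auto
  then show ?thesis by blast
qed

lemma part3: assumes r: "stp\<^sup>*\<^sup>* sig s" and st: "alg_stop n J \<delta> p s" shows "is_r n J \<delta> i s"
proof -
  have I: "Inv s" using Inv_reach[OF r] .
  have vs: "valid_word n s" "positive n s" and sD: "prec n s (DD n)" and ss: "prec n sig s"
    and sR: "\<forall>x\<in>R. prec n s x" using I D_in_R by (auto simp: Inv_def)
  have inC: "in_C n J (conj_tuple \<delta> s)"
    unfolding in_C_def
  proof (intro conjI allI impI)
    show "length (conj_tuple \<delta> s) = length J" using lenJ by (simp add: conj_tuple_def)
    fix t assume t: "t < length J"
    have e: "conj_tuple \<delta> s ! t = inv_word s @ (\<delta> ! t) @ s" using conj_nth[of t \<delta>] t lenJ by simp
    show "valid_word n (conj_tuple \<delta> s ! t)" using e vd[OF t] vs by simp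
    define j where "j = J ! t"
    have vts: "valid_word n (tau_pow n j s)" using vs by simp
    have "Sinf n (inv_word s @ (\<delta> ! t) @ s) j"
    proof (cases "t \<in> alg_D n J \<delta>")
      case True
      have pt: "braid_eq n (\<delta> ! t) (dp n j @ p t)" using pD[OF True] j_def by simp
      have "prec n (tau_pow n j s) (p t @ s)" using st True j_def by (simp add: alg_stop_def)
      then have q: "positive n (inv_word (tau_pow n j s) @ p t @ s)" using prec_iff_pos[OF vts] by simp
      have "braid_eq n (inv_word s @ (\<delta> ! t) @ s) (inv_word s @ (dp n j @ p t) @ s)"
        using be_app[OF pt] .
      also have "braid_eq n \<dots> (dp n j @ inv_word (tau_pow n j s) @ p t @ s)"
        using be_sym[OF G1[of n j s "p t @ s"]] by simp
      finally show ?thesis using q by (auto simp: Sinf_def)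
    next
      case False
      have "binf n (\<delta> ! t) \<noteq> j" using False t j_def by (simp add: alg_D_def)
      then have "j + 1 \<le> binf n (\<delta> ! t)" using bd[OF t] j_def by simp
      then have "Sinf n (\<delta> ! t) (j+1)" using binf_char[OF n2 vd[OF t]] by simp
      then obtain q0 where q0: "positive n q0" "braid_eq n (\<delta> ! t) (dp n (j+1) @ q0)" by (auto simp: Sinf_def)
      have "braid_eq n (\<delta> ! t) (dp n j @ DD n @ q0)"
        using q0(2) be_post[OF dp_add[of n j 1], of q0] be_trans by (simp add: dp_1)
      then have e1: "braid_eq n (inv_word s @ (\<delta> ! t) @ s) (inv_word s @ (dp n j @ DD n @ q0) @ s)"
        using be_app by blast
      have "prec n (tau_pow n j s) (DD n)" using prec_be_r[OF tau_D tau_prec[OF n2 sD]] .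
      then have "positive n (inv_word (tau_pow n j s) @ DD n)" using prec_iff_pos[OF vts] by simp
      then have q: "positive n (inv_word (tau_pow n j s) @ DD n @ q0 @ s)"
        using positive_append q0(1) vs(2) by (metis append.assoc)
      have "braid_eq n (inv_word s @ (\<delta> ! t) @ s) (dp n j @ inv_word (tau_pow n j s) @ DD n @ q0 @ s)"
        using e1 be_sym[OF G1[of n j s "DD n @ q0 @ s"]] be_trans by simp
      then show ?thesis using q by (auto simp: Sinf_def)
    qed
    then show "J ! t \<le> binf n (conj_tuple \<delta> s ! t)" using binf_char[OF n2] e vd[OF t] vs j_def by simp
  qed
  have sinR: "s \<in> R" using vs sD ss inC by (simp add: r_set_def simple_def)
  have min: "minimal_in n R s"
    unfolding minimal_in_def using sinR sR prec_antisym R_valid by blast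
  have "braid_eq n s' s" if "minimal_in n R s'" for s'
  proof -
    have "s' \<in> R" and "\<forall>s''\<in>R. prec n s'' s' \<longrightarrow> braid_eq n s'' s'" using that by (auto simp: minimal_in_def)
    then show ?thesis using sR sinR be_sym by blast
  qed
  then show ?thesis using min by (simp add: is_r_def)
qed

end

theorem proposition4p1:
  fixes n i :: nat and J :: "int list" and \<delta> :: "bword list" and p :: "nat \<Rightarrow> bword"
  assumes "1 \<le> i" and "i < n"
    and "in_C n J \<delta>"
    and "\<forall>t\<in>alg_D n J \<delta>. valid_word n (p t) \<and> positive n (p t) \<and>
                          braid_eq n (\<delta> ! t) (delta_pow n (J ! t) @ p t)"
  shows "(\<nexists>f. f 0 = [(i, True)] \<and> (\<forall>k. alg_step n J \<delta> p (f k) (f (Suc k))))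
       \<and> (\<forall>s. (alg_step n J \<delta> p)\<^sup>*\<^sup>* [(i, True)] s \<longrightarrow>
              alg_stop n J \<delta> p s \<or> (\<exists>s2. alg_step n J \<delta> p s s2))
       \<and> (\<forall>s. (alg_step n J \<delta> p)\<^sup>*\<^sup>* [(i, True)] s \<and> alg_stop n J \<delta> p s \<longrightarrow>
              is_r n J \<delta> i s)"
proof -
  interpret alg n i J \<delta> p using assms by (unfold_locales) auto
  show ?thesis using part1 part2 part3 by blast
qed


end
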